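(* Let $f\in\mathcal{C}(2\pi)$ with modulus of continuity $\omega_f$. Then for every integer $n\ge2$, $$E^\alpha_{nn}(f;[-\pi,\pi])\le\frac{1+|\alpha|_\infty(\|Id-L\|-1)}{1-|\alpha|_\infty}\,2\,\omega_f\Big(\frac{2\pi\sqrt3}{n+2}\Big)+\frac{|\alpha|_\infty}{1-|\alpha|_\infty}\|Id-L\|\,\|f\|_\infty.$$
   Context: Let $I=[x_0,x_N]=[-\pi,\pi]$, $N\ge2$, $\Delta=\{x_0<x_1<\dots<x_N\}$, $I_i=[x_{i-1},x_i]$, and $L_i(x)=a_ix+b_i$ the affine map of $I$ onto $I_i$ with $L_i(x_0)=x_{i-1}$, $L_i(x_N)=x_i$; $\alpha\in(-1,1)^N$, $|\alpha|_\infty=\max_i|\alpha_i|$. For $f,b$ continuous with $b(x_0)=f(x_0)$, $b(x_N)=f(x_N)$, $f^\alpha_{\Delta,b}$ is the unique continuous $g$ with $g(x)=f(x)+\alpha_i(g-b)(L_i^{-1}(x))$ for $x\in I_i$. $L:\mathcal{C}(2\pi)\to\mathcal{C}(2\pi)$ is bounded linear with $(Lf)(x_0)=f(x_0)$, $(Lf)(x_N)=f(x_N)$, and $\mathcal{F}^\alpha_{\Delta,L}(f)=f^\alpha_{\Delta,Lf}$. $\mathcal{C}(2\pi)=\{f\in\mathcal{C}([-\pi,\pi]):f(-\pi)=f(\pi)\}$ with sup norm; $\mathfrak{T}_m$ = real trigonometric polynomials of degree $\le m$; $\mathfrak{R}_{mn}(2\pi)=\{p/q:p\in\mathfrak{T}_m,q\in\mathfrak{T}_n,q>0\text{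 on }[-\pi,\pi]\}$; $\mathfrak{R}^\alpha_{mn}(2\pi)=\mathcal{F}^\alpha_{\Delta,L}(\mathfrak{R}_{mn}(2\pi))$; $E^\alpha_{mn}(f;[-\pi,\pi])=\inf\{\|f-r^\alpha\|_\infty:r^\alpha\in\mathfrak{R}^\alpha_{mn}(2\pi)\}$. The modulus of continuity is $\omega_f(\delta)=\sup\{|f(x)-f(y)|:x,y\in[-\pi,\pi],|x-y|\le\delta\}$. *)

theory Defs
  imports "HOL-Analysis.Analysis"
begin

text \<open>All functions are real-valued functions on the reals, considered on the
interval I = [-pi, pi]; only their values on I matter.\<close>

definition Ipi :: "real set" where
  "Ipi = {-pi..pi}"

definition C2pi :: "(real \<Rightarrow> real) set" where
  "C2pi = {f. continuous_on {-pi..pi} f \<and> f (-pi) = f pi}"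

definition supn :: "(real \<Rightarrow> real) \<Rightarrow> real" where
  "supn g = Sup ((\<lambda>x. \<bar>g x\<bar>) ` {-pi..pi})"

definition modcont :: "(real \<Rightarrow> real) \<Rightarrow> real \<Rightarrow> real" where
  "modcont f \<delta> = Sup {\<bar>f x - f y\<bar> | x y. x \<in> {-pi..pi} \<and> y \<in> {-pi..pi} \<and> \<bar>x - y\<bar> \<le> \<delta>}"

definition partition_pi :: "nat \<Rightarrow> (nat \<Rightarrow> real) \<Rightarrow> bool" where
  "partition_pi N xs \<longleftrightarrow> xs 0 = -pi \<and> xs N = pi \<and> (\<forall>i<N. xs i < xs (Suc i))"

text \<open>Inverse of the affine map L_i of [x_0,x_N] onto [x_(i-1), x_i].\<close>
definition Linv :: "(nat \<Rightarrow> real) \<Rightarrow> nat \<Rightarrow> real \<Rightarrow> real" where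
  "Linv xs i y = -pi + (y - xs (i - 1)) * (2 * pi) / (xs i - xs (i - 1))"

definition fractal_fun ::
  "nat \<Rightarrow> (nat \<Rightarrow> real) \<Rightarrow> (nat \<Rightarrow> real) \<Rightarrow> (real \<Rightarrow> real) \<Rightarrow> (real \<Rightarrow> real) \<Rightarrow> (real \<Rightarrow> real)" where
  "fractal_fun N xs \<alpha> b f = (THE g. continuous_on {-pi..pi} g
      \<and> (\<forall>x. x \<notin> {-pi..pi} \<longrightarrow> g x = 0)
      \<and> (\<forall>i\<in>{1..N}. \<forall>x\<in>{xs (i - 1)..xs i}.
            g x = f x + \<alpha> i * (g (Linv xs i x) - b (Linv xs i x))))"

definition fractal_op ::
  "nat \<Rightarrow> (nat \<Rightarrow> real) \<Rightarrow> (nat \<Rightarrow> real) \<Rightarrow> ((real \<Rightarrow> real) \<Rightarrow> (real \<Rightarrow> real)) \<Rightarrow> (real \<Rightarrow> real) \<Rightarrow> (real \<Rightarrow> real)" where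
  "fractal_op N xs \<alpha> L f = fractal_fun N xs \<alpha> (L f) f"

definition alpha_norm :: "nat \<Rightarrow> (nat \<Rightarrow> real) \<Rightarrow> real" where
  "alpha_norm N \<alpha> = Max ((\<lambda>i. \<bar>\<alpha> i\<bar>) ` {1..N})"

definition IdL_norm :: "((real \<Rightarrow> real) \<Rightarrow> (real \<Rightarrow> real)) \<Rightarrow> real" where
  "IdL_norm L = Sup {supn (\<lambda>x. f x - L f x) | f. f \<in> C2pi \<and> supn f \<le> 1}"

definition admissible_L :: "((real \<Rightarrow> real) \<Rightarrow> (real \<Rightarrow> real)) \<Rightarrow> bool" where
  "admissible_L L \<longleftrightarrow>
     (\<forall>f\<in>C2pi. L f \<in> C2pi)
   \<and> (\<forall>f\<in>C2pi. \<forall>g\<in>C2pi. \<forall>a b::real. \<forall>x\<in>{-pi..pi}.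
        L (\<lambda>t. a * f t + b * g t) x = a * L f x + b * L g x)
   \<and> (\<exists>B. \<forall>f\<in>C2pi. supn (L f) \<le> B * supn f)
   \<and> (\<forall>f\<in>C2pi. L f (-pi) = f (-pi) \<and> L f pi = f pi)"

definition trig_poly :: "nat \<Rightarrow> (real \<Rightarrow> real) set" where
  "trig_poly m = {p. \<exists>a b :: nat \<Rightarrow> real.
      p = (\<lambda>x. a 0 + (\<Sum>k=1..m. a k * cos (real k * x) + b k * sin (real k * x)))}"

definition trig_rat :: "nat \<Rightarrow> nat \<Rightarrow> (real \<Rightarrow> real) set" where
  "trig_rat m n = {(\<lambda>x. p x / q x) | p q. p \<in> trig_poly m \<and> q \<in> trig_poly n
                     \<and> (\<forall>x\<in>{-pi..pi}. q x > 0)}"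

definition E_alpha ::
  "nat \<Rightarrow> (nat \<Rightarrow> real) \<Rightarrow> (nat \<Rightarrow> real) \<Rightarrow> ((real \<Rightarrow> real) \<Rightarrow> (real \<Rightarrow> real))
    \<Rightarrow> nat \<Rightarrow> nat \<Rightarrow> (real \<Rightarrow> real) \<Rightarrow> real" where
  "E_alpha N xs \<alpha> L m n f =
     Inf {supn (\<lambda>x. f x - r\<alpha> x) | r\<alpha>. r\<alpha> \<in> fractal_op N xs \<alpha> L ` trig_rat m n}"

end

theory Submission
  imports Defs
begin


lemma cont_bdd:
  fixes u :: "real \<Rightarrow> real"
  assumes "continuous_on {-pi..pi} u"
  shows "bdd_above ((\<lambda>x. \<bar>u x\<bar>) ` {-pi..pi})"
proof -
  have "compact (u ` {-pi..pi})" using compact_continuous_image[OF assms] by simp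
  then obtain B where B: "\<forall>y\<in>u ` {-pi..pi}. norm y \<le> B"
    using compact_imp_bounded bounded_iff by metis
  show ?thesis unfolding bdd_above_def using B by auto
qed

lemma supn_ge:
  assumes "continuous_on {-pi..pi} u" "x \<in> {-pi..pi}"
  shows "\<bar>u x\<bar> \<le> supn u"
  unfolding supn_def using cont_bdd[OF assms(1)] assms(2) by (intro cSUP_upper) auto

lemma supn_le:
  assumes "\<And>x. x \<in> {-pi..pi} \<Longrightarrow> \<bar>u x\<bar> \<le> c"
  shows "supn u \<le> c"
  unfolding supn_def using assms by (intro cSUP_least) auto

lemma supn_nonneg:
  assumes "continuous_on {-pi..pi} u"
  shows "0 \<le> supn u"
proof -
  have "\<bar>u 0\<bar> \<le> supn u" using supn_ge[OF assms, of 0] by (simp add: pi_gt_zero less_imp_le)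
  then show ?thesis by linarith
qed

lemma modcont_ge:
  assumes "continuous_on {-pi..pi} f" "x \<in> {-pi..pi}" "y \<in> {-pi..pi}" "\<bar>x - y\<bar> \<le> d"
  shows "\<bar>f x - f y\<bar> \<le> modcont f d"
proof -
  obtain B where B: "\<And>z. z \<in> {-pi..pi} \<Longrightarrow> \<bar>f z\<bar> \<le> B"
    using cont_bdd[OF assms(1)] unfolding bdd_above_def by fastforce
  have "bdd_above {\<bar>f x - f y\<bar> | x y. x \<in> {-pi..pi} \<and> y \<in> {-pi..pi} \<and> \<bar>x - y\<bar> \<le> d}"
    unfolding bdd_above_def
  proof (intro exI[of _ "2*B"] ballI)
    fix z assume "z \<in> {\<bar>f x - f y\<bar> | x y. x \<in> {-pi..pi} \<and> y \<in> {-pi..pi} \<and> \<bar>x - y\<bar> \<le> d}"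
    then obtain x y where "z = \<bar>f x - f y\<bar>" "x \<in> {-pi..pi}" "y \<in> {-pi..pi}" by auto
    with B[of x] B[of y] show "z \<le> 2*B" by linarith
  qed
  then show ?thesis unfolding modcont_def using assms by (intro cSup_upper) auto
qed



lemma tp_zero: "(\<lambda>x. 0) \<in> trig_poly m"
  unfolding trig_poly_def by (rule CollectI, rule exI[of _ "\<lambda>_. 0"], rule exI[of _ "\<lambda>_. 0"]) simp

lemma tp_add:
  assumes "p \<in> trig_poly m" "q \<in> trig_poly m"
  shows "(\<lambda>x. p x + q x) \<in> trig_poly m"
proof -
  obtain a b where p: "p = (\<lambda>x. a 0 + (\<Sum>k=1..m. a k * cos (real k * x) + b k * sin (real k * x)))"
    using assms(1) unfolding trig_poly_def by auto
  obtain c d where q: "q = (\<lambda>x. c 0 + (\<Sum>k=1..m. c k * cos (real k * x) + d k * sin (real k * x)))"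
    using assms(2) unfolding trig_poly_def by auto
  show ?thesis unfolding trig_poly_def
    apply (rule CollectI, rule exI[of _ "\<lambda>k. a k + c k"], rule exI[of _ "\<lambda>k. b k + d k"])
    by (auto simp: p q sum.distrib[symmetric] algebra_simps)
qed

lemma tp_scale:
  assumes "p \<in> trig_poly m"
  shows "(\<lambda>x. c * p x) \<in> trig_poly m"
proof -
  obtain a b where p: "p = (\<lambda>x. a 0 + (\<Sum>k=1..m. a k * cos (real k * x) + b k * sin (real k * x)))"
    using assms(1) unfolding trig_poly_def by auto
  show ?thesis unfolding trig_poly_def
    apply (rule CollectI, rule exI[of _ "\<lambda>k. c * a k"], rule exI[of _ "\<lambda>k. c * b k"])
    by (auto simp: p sum_distrib_left algebra_simps)
qed

lemma tp_sum:
  assumes "finite A" "\<And>i. i \<in> A \<Longrightarrow> F i \<in> trig_poly m"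
  shows "(\<lambda>x. \<Sum>i\<in>A. F i x) \<in> trig_poly m"
  using assms
proof (induction A rule: finite_induct)
  case empty then show ?case using tp_zero by simp
next
  case (insert i A)
  then show ?case using tp_add[of "F i" m "\<lambda>x. \<Sum>i\<in>A. F i x"] by simp
qed

lemma tp_cos:
  assumes "k \<le> m"
  shows "(\<lambda>x. cos (real k * x)) \<in> trig_poly m"
  unfolding trig_poly_def
  apply (rule CollectI, rule exI[of _ "\<lambda>j. if j = k then 1 else 0"], rule exI[of _ "\<lambda>_. 0"])
proof -
  have "(\<Sum>j=1..m. (if j = k then 1 else 0) * cos (real j * x) + 0 * sin (real j * x))
     = (\<Sum>j\<in>{1..m}. if j = k then cos (real j * x) else 0)" for x
    by (intro sum.cong) auto
  then show "(\<lambda>x. cos (real k * x)) =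
    (\<lambda>x. (if 0 = k then 1 else 0) + (\<Sum>j=1..m. (if j = k then 1 else 0) * cos (real j * x) + 0 * sin (real j * x)))"
    using assms by (cases "k = 0") (auto simp: sum.delta)
qed

lemma tp_sin:
  assumes "k \<le> m"
  shows "(\<lambda>x. sin (real k * x)) \<in> trig_poly m"
  unfolding trig_poly_def
  apply (rule CollectI, rule exI[of _ "\<lambda>_. 0"], rule exI[of _ "\<lambda>j. if j = k then 1 else 0"])
proof -
  have "(\<Sum>j=1..m. 0 * cos (real j * x) + (if j = k then 1 else 0) * sin (real j * x))
     = (\<Sum>j\<in>{1..m}. if j = k then sin (real j * x) else 0)" for x
    by (intro sum.cong) auto
  then show "(\<lambda>x. sin (real k * x)) =
    (\<lambda>x. 0 + (\<Sum>j=1..m. 0 * cos (real j * x) + (if j = k then 1 else 0) * sin (real j * x)))"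
    using assms by (cases "k = 0") (auto simp: sum.delta)
qed

lemma tp_mono:
  assumes "p \<in> trig_poly m" "m \<le> m'"
  shows "p \<in> trig_poly m'"
proof -
  obtain a b where p: "p = (\<lambda>x. a 0 + (\<Sum>k=1..m. a k * cos (real k * x) + b k * sin (real k * x)))"
    using assms(1) unfolding trig_poly_def by auto
  have eq: "(\<Sum>k=1..m'. (if k \<le> m then a k else 0) * cos (real k * x) + (if k \<le> m then b k else 0) * sin (real k * x))
      = (\<Sum>k=1..m. a k * cos (real k * x) + b k * sin (real k * x))" for x
  proof -
    have "{1..m'} = {1..m} \<union> {m<..m'}" using assms(2) by auto
    then have "(\<Sum>k=1..m'. (if k \<le> m then a k else 0) * cos (real k * x) + (if k \<le> m then b k else 0) * sin (real k * x))
      = (\<Sum>k\<in>{1..m}. (if k \<le> m then a k else 0) * cos (real k * x) + (if k \<le> m then b k else 0) * sin (real k * x))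
       + (\<Sum>k\<in>{m<..m'}. (if k \<le> m then a k else 0) * cos (real k * x) + (if k \<le> m then b k else 0) * sin (real k * x))"
      by (simp add: sum.union_disjoint ivl_disj_int)
    also have "\<dots> = (\<Sum>k=1..m. a k * cos (real k * x) + b k * sin (real k * x))"
      by (simp add: sum.neutral)
    finally show ?thesis .
  qed
  show ?thesis unfolding trig_poly_def
    apply (rule CollectI, rule exI[of _ "\<lambda>k. if k \<le> m then a k else 0"], rule exI[of _ "\<lambda>k. if k \<le> m then b k else 0"])
    by (simp add: p eq[simplified])
qed

lemma tp_cont:
  assumes "p \<in> trig_poly m"
  shows "continuous_on UNIV p"
proof -
  obtain a b where p: "p = (\<lambda>x. a 0 + (\<Sum>k=1..m. a k * cos (real k * x) + b k * sin (real k * x)))"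
    using assms(1) unfolding trig_poly_def by auto
  show ?thesis unfolding p by (intro continuous_intros)
qed

lemma tp_per:
  assumes "p \<in> trig_poly m"
  shows "p (-pi) = p pi"
proof -
  obtain a b where p: "p = (\<lambda>x. a 0 + (\<Sum>k=1..m. a k * cos (real k * x) + b k * sin (real k * x)))"
    using assms(1) unfolding trig_poly_def by auto
  have "sin (real k * pi) = 0" for k :: nat by (simp add: sin_zero_iff_int2)
  then show ?thesis unfolding p by simp
qed

lemma tp_cos_shift:
  fixes k l :: nat
  assumes "k \<le> m" "l \<le> m"
  shows "(\<lambda>x. cos ((real k - real l) * (x - t))) \<in> trig_poly m"
proof -
  have e: "cos ((real k - real l) * (x - t)) =
     cos ((real k - real l) * t) * cos ((real k - real l) * x) + sin ((real k - real l) * t) * sin ((real k - real l) * x)" for x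
  proof -
    have "(real k - real l) * (x - t) = (real k - real l) * x - (real k - real l) * t"
      by (simp add: right_diff_distrib)
    then show ?thesis by (simp only: cos_diff) (simp add: mult.commute)
  qed
  have cm: "cos ((real k - real l) * x) = cos ((real l - real k) * x)" for x
    by (metis cos_minus minus_diff_eq mult_minus_left)
  have sm: "sin ((real k - real l) * x) = -1 * sin ((real l - real k) * x)" for x
    by (metis sin_minus minus_diff_eq mult_minus_left mult_minus1)
  have c: "(\<lambda>x. cos ((real k - real l) * x)) \<in> trig_poly m"
  proof (cases "l \<le> k")
    case True
    then show ?thesis using tp_cos[of "k-l" m] assms by (simp add: of_nat_diff)
  next
    case False
    then show ?thesis using tp_cos[of "l-k" m] assms by (simp add: of_nat_diff cm)
  qed
  have s: "(\<lambda>x. sin ((real k - real l) * x)) \<in> trig_poly m"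
  proof (cases "l \<le> k")
    case True
    then show ?thesis using tp_sin[of "k-l" m] assms by (simp add: of_nat_diff)
  next
    case False
    then have "(\<lambda>x. -1 * sin ((real l - real k) * x)) \<in> trig_poly m"
      using tp_scale[OF tp_sin[of "l-k" m], of "-1"] assms by (simp add: of_nat_diff)
    then show ?thesis by (subst sm)
  qed
  show ?thesis unfolding e by (intro tp_add tp_scale c s)
qed



definition tnode :: "nat \<Rightarrow> nat \<Rightarrow> real" where
  "tnode M j = -pi + real j * (2 * pi / real M)"

lemma quad_cos:
  fixes d :: int
  assumes "M > 0" "\<bar>d\<bar> < int M"
  shows "(\<Sum>j<M. cos (of_int d * (x - tnode M j))) = (if d = 0 then real M else 0)"
proof (cases "d = 0")
  case True then show ?thesis by simp
next
  case False
  define \<theta> where "\<theta> = 2 * pi * of_int d / real M"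
  define z where "z = cis (- \<theta>)"
  have e: "cos (of_int d * (x - tnode M j)) = Re (cis (of_int d * (x + pi)) * z ^ j)" for j
  proof -
    have "of_int d * (x - tnode M j) = of_int d * (x + pi) + real j * (- \<theta>)"
      unfolding tnode_def \<theta>_def using assms(1) by (simp add: field_simps)
    moreover have "cis (of_int d * (x + pi)) * z ^ j = cis (of_int d * (x + pi) + real j * (- \<theta>))"
      unfolding z_def Complex.DeMoivre cis_mult ..
    ultimately show ?thesis by (simp only: cis.sel(1))
  qed
  have z1: "z \<noteq> 1"
  proof
    assume "z = 1"
    then have "cos (- \<theta>) = 1" unfolding z_def by (metis cis.sel(1) one_complex.sel(1))
    then obtain n :: int where n: "- \<theta> = of_int n * 2 * pi" using cos_one_2pi_int by blast
    then have "pi * (- of_int d) = pi * (of_int n * real M)" unfolding \<theta>_def using assms(1) pi_gt_zero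
      by (simp add: field_simps)
    then have "- of_int d = of_int n * real M" by (metis mult_cancel_left pi_neq_zero)
    then have "- d = n * int M" by (metis of_int_eq_iff of_int_mult of_int_of_nat_eq of_int_minus)
    then have "\<bar>d\<bar> = \<bar>n\<bar> * int M" by (metis abs_minus_cancel abs_mult abs_of_nat)
    moreover have "n \<noteq> 0" using \<open>- d = n * int M\<close> False by auto
    ultimately have "\<bar>d\<bar> \<ge> int M" by (simp add: mult_le_cancel_right1 int_one_le_iff_zero_less)
    then show False using assms(2) by simp
  qed
  have zM: "z ^ M = 1"
  proof -
    have "z ^ M = cis (real M * (- \<theta>))" unfolding z_def by (simp add: Complex.DeMoivre)
    also have "real M * (- \<theta>) = 2 * pi * of_int (- d)" unfolding \<theta>_def using assms(1) by simp
    also have "cis \<dots> = 1" by (rule cis_multiple_2pi) simp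
    finally show ?thesis .
  qed
  have "(\<Sum>j<M. cos (of_int d * (x - tnode M j))) = Re (cis (of_int d * (x + pi)) * (\<Sum>j<M. z ^ j))"
    by (simp add: e sum_distrib_left)
  also have "(\<Sum>j<M. z ^ j) = 0" using geometric_sum[OF z1, of M] zM by simp
  finally show ?thesis using False by simp
qed

definition aK :: "nat \<Rightarrow> nat \<Rightarrow> real" where
  "aK m k = real (min (k+1) (2*m+1-k))"

definition JK :: "nat \<Rightarrow> real \<Rightarrow> real" where
  "JK m u = (\<Sum>k\<le>2*m. aK m k * cos (real k * u))\<^sup>2 + (\<Sum>k\<le>2*m. aK m k * sin (real k * u))\<^sup>2"

lemma JK_nonneg: "JK m u \<ge> 0"
  unfolding JK_def by simp

lemma JK_expand:
  "JK m u = (\<Sum>k\<le>2*m. \<Sum>l\<le>2*m. aK m k * aK m l * cos ((real k - real l) * u))"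
proof -
  have "JK m u = (\<Sum>k\<le>2*m. \<Sum>l\<le>2*m. (aK m k * cos (real k * u)) * (aK m l * cos (real l * u)))
               + (\<Sum>k\<le>2*m. \<Sum>l\<le>2*m. (aK m k * sin (real k * u)) * (aK m l * sin (real l * u)))"
    unfolding JK_def power2_eq_square sum_product by simp
  also have "\<dots> = (\<Sum>k\<le>2*m. \<Sum>l\<le>2*m. aK m k * aK m l * cos ((real k - real l) * u))"
    unfolding sum.distrib[symmetric]
  proof (intro sum.cong refl)
    fix k l
    have "(real k - real l) * u = real k * u - real l * u" by (simp add: left_diff_distrib)
    then show "aK m k * cos (real k * u) * (aK m l * cos (real l * u)) +
          aK m k * sin (real k * u) * (aK m l * sin (real l * u)) =
          aK m k * aK m l * cos ((real k - real l) * u)"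
      by (simp only: cos_diff) (simp add: algebra_simps)
  qed
  finally show ?thesis .
qed



lemma diff_sq_sum:
  fixes a :: "nat \<Rightarrow> real"
  shows "(\<Sum>k<n. (a (Suc k) - a k)\<^sup>2) = 2*(\<Sum>k<Suc n. (a k)\<^sup>2) - (a 0)\<^sup>2 - (a n)\<^sup>2 - 2*(\<Sum>k<n. a k * a (Suc k))"
  by (induction n) (simp_all add: power2_eq_square algebra_simps)

lemma sum_kp1: "(\<Sum>k\<le>m. real (k+1)) = real (m+1) * real (m+2) / 2"
  by (induction m) (simp_all add: field_simps)

lemma sum_mmi: "(\<Sum>i<m. real (m - i)) = real m * real (m+1) / 2"
proof (induction m)
  case 0 then show ?case by simp
next
  case (Suc m)
  have "(\<Sum>i<Suc m. real (Suc m - i)) = (\<Sum>i<m. real (Suc m - i)) + 1" by simp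
  also have "(\<Sum>i<m. real (Suc m - i)) = (\<Sum>i<m. real (m - i) + 1)"
    by (intro sum.cong) (auto simp: Suc_diff_le of_nat_Suc)
  also have "\<dots> = real m * real (m+1) / 2 + real m" using Suc by (simp add: sum.distrib)
  finally show ?case by (simp add: field_simps)
qed

lemma aK_sum: "(\<Sum>k\<le>2*m. aK m k) = (real m + 1)^2"
proof -
  have u: "{..2*m} = {..m} \<union> {m<..2*m}" by auto
  have "(\<Sum>k\<le>2*m. aK m k) = (\<Sum>k\<le>m. aK m k) + (\<Sum>k\<in>{m<..2*m}. aK m k)"
    unfolding u by (rule sum.union_disjoint) auto
  also have "(\<Sum>k\<le>m. aK m k) = (\<Sum>k\<le>m. real (k+1))"
    by (intro sum.cong) (auto simp: aK_def)
  also have "(\<Sum>k\<in>{m<..2*m}. aK m k) = (\<Sum>i<m. aK m (m+1+i))"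
  proof -
    have "{m<..2*m} = (\<lambda>i. m+1+i) ` {..<m}"
    proof
      show "{m<..2*m} \<subseteq> (\<lambda>i. m+1+i) ` {..<m}"
      proof
        fix k assume "k \<in> {m<..2*m}"
        then show "k \<in> (\<lambda>i. m+1+i) ` {..<m}" by (intro image_eqI[of _ _ "k - (m+1)"]) auto
      qed
    qed auto
    then show ?thesis by (simp add: sum.reindex inj_on_def)
  qed
  also have "(\<Sum>i<m. aK m (m+1+i)) = (\<Sum>i<m. real (m - i))"
    by (intro sum.cong) (auto simp: aK_def)
  finally have "(\<Sum>k\<le>2*m. aK m k) = (\<Sum>k\<le>m. real (k+1)) + (\<Sum>i<m. real (m - i))" .
  then show ?thesis by (simp only: sum_kp1 sum_mmi) (simp add: field_simps power2_eq_square)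
qed

definition c0K :: "nat \<Rightarrow> real" where "c0K m = (\<Sum>k\<le>2*m. (aK m k)\<^sup>2)"
definition PK :: "nat \<Rightarrow> real" where "PK m = (\<Sum>k<2*m. aK m k * aK m (Suc k))"

lemma c0_P: "c0K m - PK m = real m + 1"
proof -
  have d: "(aK m (Suc k) - aK m k)\<^sup>2 = 1" if "k < 2*m" for k
  proof (cases "k < m")
    case True then show ?thesis by (simp add: aK_def)
  next
    case False
    then have "aK m k = real (2*m+1-k)" "aK m (Suc k) = real (2*m - k)" using that by (auto simp: aK_def)
    moreover have "real (2*m+1-k) = real (2*m-k) + 1" using that by simp
    ultimately show ?thesis by simp
  qed
  have "(\<Sum>k<2*m. (aK m (Suc k) - aK m k)\<^sup>2) = real (2*m)" using d by simp
  moreover have "aK m 0 = 1" "aK m (2*m) = 1" by (auto simp: aK_def)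
  moreover have "(\<Sum>k<Suc (2*m). (aK m k)\<^sup>2) = c0K m" unfolding c0K_def lessThan_Suc_atMost ..
  ultimately show ?thesis using diff_sq_sum[of "aK m" "2*m"] unfolding PK_def by simp
qed

lemma c0_lower: "c0K m * (2*real m + 1) \<ge> (real m + 1)^4"
proof -
  have "(\<Sum>k\<le>2*m. aK m k)\<^sup>2 \<le> c0K m * real (card {..2*m})"
    unfolding c0K_def by (rule sum_squared_le_sum_of_squares)
  moreover have "((real m + 1)^2)\<^sup>2 = (real m + 1)^4" by simp
  moreover have "real (card {..2*m}) = 2*real m + 1" by simp
  ultimately show ?thesis unfolding aK_sum by (metis add.commute)
qed

lemma c0_pos: "c0K m > 0"
proof -
  have "(real m + 1)^4 > 0" by simp
  then have "c0K m * (2*real m + 1) > 0" using c0_lower[of m] by linarith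
  then show ?thesis by (simp add: zero_less_mult_iff)
qed



lemma sum_shift_guard:
  fixes f :: "nat \<Rightarrow> real"
  shows "(\<Sum>k\<le>n. if Suc k \<le> n then f k else 0) = (\<Sum>k<n. f k)"
proof -
  have "(\<Sum>k\<le>n. if Suc k \<le> n then f k else 0) = (\<Sum>k\<in>{k\<in>{..n}. Suc k \<le> n}. f k)"
    by (rule sum.inter_filter[symmetric]) simp
  also have "{k\<in>{..n}. Suc k \<le> n} = {..<n}" by auto
  finally show ?thesis .
qed

lemma quadJ:
  "(\<Sum>j<2*m+2. JK m (x - tnode (2*m+2) j)) = real (2*m+2) * c0K m"
proof -
  define M where "M = 2*m+2"
  define A where "A k l = aK m k * aK m l" for k l
  have "(\<Sum>j<M. JK m (x - tnode M j)) =
        (\<Sum>j<M. \<Sum>k\<le>2*m. \<Sum>l\<le>2*m. A k l * cos ((real k - real l) * (x - tnode M j)))"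
    unfolding JK_expand A_def ..
  also have "\<dots> = (\<Sum>k\<le>2*m. \<Sum>j<M. \<Sum>l\<le>2*m. A k l * cos ((real k - real l) * (x - tnode M j)))"
    by (rule sum.swap)
  also have "\<dots> = (\<Sum>k\<le>2*m. \<Sum>l\<le>2*m. \<Sum>j<M. A k l * cos ((real k - real l) * (x - tnode M j)))"
    by (intro sum.cong refl sum.swap)
  also have "\<dots> = (\<Sum>k\<le>2*m. \<Sum>l\<le>2*m. A k l * (if int k - int l = 0 then real M else 0))"
  proof (intro sum.cong refl)
    fix k l assume kl: "k \<in> {..2*m}" "l \<in> {..2*m}"
    have "(\<Sum>j<M. A k l * cos ((real k - real l) * (x - tnode M j))) =
          A k l * (\<Sum>j<M. cos (of_int (int k - int l) * (x - tnode M j)))"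
      by (simp add: sum_distrib_left)
    also have "(\<Sum>j<M. cos (of_int (int k - int l) * (x - tnode M j))) = (if int k - int l = 0 then real M else 0)"
      using kl by (intro quad_cos) (auto simp: M_def)
    finally show "(\<Sum>j<M. A k l * cos ((real k - real l) * (x - tnode M j))) =
          A k l * (if int k - int l = 0 then real M else 0)" .
  qed
  also have "\<dots> = (\<Sum>k\<le>2*m. \<Sum>l\<le>2*m. if l = k then A k l * real M else 0)"
    by (intro sum.cong refl) auto
  also have "\<dots> = (\<Sum>k\<le>2*m. A k k * real M)"
    by (simp add: sum.delta)
  also have "\<dots> = real M * c0K m"
    unfolding c0K_def A_def by (simp add: sum_distrib_left power2_eq_square mult.commute)
  finally show ?thesis unfolding M_def .
qed

lemma quadJcos:
  "(\<Sum>j<2*m+2. cos (x - tnode (2*m+2) j) * JK m (x - tnode (2*m+2) j)) = real (2*m+2) * PK m"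
proof -
  define M where "M = 2*m+2"
  define A where "A k l = aK m k * aK m l" for k l
  have cc: "cos u * cos ((real k - real l) * u) =
      (cos (of_int (int k - int l - 1) * u) + cos (of_int (int k - int l + 1) * u)) / 2" for u k l
  proof -
    have "cos u * cos ((real k - real l) * u) = cos ((real k - real l) * u) * cos u" by simp
    also have "\<dots> = (cos ((real k - real l) * u - u) + cos ((real k - real l) * u + u)) / 2"
      by (rule cos_times_cos)
    also have "(real k - real l) * u - u = of_int (int k - int l - 1) * u" by (simp add: algebra_simps)
    also have "(real k - real l) * u + u = of_int (int k - int l + 1) * u" by (simp add: algebra_simps)
    finally show ?thesis .
  qed
  have "(\<Sum>j<M. cos (x - tnode M j) * JK m (x - tnode M j)) =
        (\<Sum>j<M. \<Sum>k\<le>2*m. \<Sum>l\<le>2*m. A k l * (cos (x - tnode M j) * cos ((real k - real l) * (x - tnode M j))))"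
    unfolding JK_expand A_def by (simp add: sum_distrib_left algebra_simps)
  also have "\<dots> = (\<Sum>k\<le>2*m. \<Sum>j<M. \<Sum>l\<le>2*m. A k l * (cos (x - tnode M j) * cos ((real k - real l) * (x - tnode M j))))"
    by (rule sum.swap)
  also have "\<dots> = (\<Sum>k\<le>2*m. \<Sum>l\<le>2*m. \<Sum>j<M. A k l * (cos (x - tnode M j) * cos ((real k - real l) * (x - tnode M j))))"
    by (intro sum.cong refl sum.swap)
  also have "\<dots> = (\<Sum>k\<le>2*m. \<Sum>l\<le>2*m. A k l * ((if int k - int l - 1 = 0 then real M else 0)
                                                + (if int k - int l + 1 = 0 then real M else 0)) / 2)"
  proof (intro sum.cong refl)
    fix k l assume kl: "k \<in> {..2*m}" "l \<in> {..2*m}"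
    have "(\<Sum>j<M. A k l * (cos (x - tnode M j) * cos ((real k - real l) * (x - tnode M j)))) =
          A k l * ((\<Sum>j<M. cos (of_int (int k - int l - 1) * (x - tnode M j)))
                 + (\<Sum>j<M. cos (of_int (int k - int l + 1) * (x - tnode M j)))) / 2"
      unfolding cc by (simp add: sum_distrib_left sum.distrib sum_divide_distrib[symmetric] algebra_simps)
    also have "(\<Sum>j<M. cos (of_int (int k - int l - 1) * (x - tnode M j))) = (if int k - int l - 1 = 0 then real M else 0)"
      using kl by (intro quad_cos) (auto simp: M_def)
    also have "(\<Sum>j<M. cos (of_int (int k - int l + 1) * (x - tnode M j))) = (if int k - int l + 1 = 0 then real M else 0)"
      using kl by (intro quad_cos) (auto simp: M_def)
    finally show "(\<Sum>j<M. A k l * (cos (x - tnode M j) * cos ((real k - real l) * (x - tnode M j)))) =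
          A k l * ((if int k - int l - 1 = 0 then real M else 0) + (if int k - int l + 1 = 0 then real M else 0)) / 2" .
  qed
  also have "\<dots> = real M / 2 * ((\<Sum>k\<le>2*m. \<Sum>l\<le>2*m. if k = Suc l then A k l else 0)
                              + (\<Sum>k\<le>2*m. \<Sum>l\<le>2*m. if l = Suc k then A k l else 0))"
  proof -
    have "(\<Sum>k\<le>2*m. \<Sum>l\<le>2*m. A k l * ((if int k - int l - 1 = 0 then real M else 0)
                                                + (if int k - int l + 1 = 0 then real M else 0)) / 2)
        = (\<Sum>k\<le>2*m. \<Sum>l\<le>2*m. real M / 2 * ((if k = Suc l then A k l else 0) + (if l = Suc k then A k l else 0)))"
      by (intro sum.cong refl) auto
    also have "\<dots> = real M / 2 * ((\<Sum>k\<le>2*m. \<Sum>l\<le>2*m. if k = Suc l then A k l else 0)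
                              + (\<Sum>k\<le>2*m. \<Sum>l\<le>2*m. if l = Suc k then A k l else 0))"
      by (simp only: sum_distrib_left[symmetric] sum.distrib)
    finally show ?thesis .
  qed
  also have "(\<Sum>k\<le>2*m. \<Sum>l\<le>2*m. if l = Suc k then A k l else 0) = PK m"
  proof -
    have "(\<Sum>k\<le>2*m. \<Sum>l\<le>2*m. if l = Suc k then A k l else 0) = (\<Sum>k\<le>2*m. if Suc k \<le> 2*m then A k (Suc k) else 0)"
      by (intro sum.cong refl) (simp add: sum.delta')
    then show ?thesis unfolding sum_shift_guard PK_def A_def .
  qed
  also have "(\<Sum>k\<le>2*m. \<Sum>l\<le>2*m. if k = Suc l then A k l else 0) = PK m"
  proof -
    have "(\<Sum>k\<le>2*m. \<Sum>l\<le>2*m. if k = Suc l then A k l else 0) = (\<Sum>l\<le>2*m. \<Sum>k\<le>2*m. if k = Suc l then A k l else 0)"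
      by (rule sum.swap)
    also have "\<dots> = (\<Sum>l\<le>2*m. if Suc l \<le> 2*m then A (Suc l) l else 0)"
      by (intro sum.cong refl) (simp add: sum.delta')
    finally show ?thesis unfolding sum_shift_guard PK_def A_def by (simp add: mult.commute)
  qed
  finally show ?thesis unfolding M_def by simp
qed



lemma jordan:
  assumes "0 \<le> v" "v \<le> pi/2"
  shows "2 * v / pi \<le> sin v"
proof -
  define g where "g v = 2 * v / pi - sin v" for v
  have cv: "convex_on {0..pi} g"
  proof (rule convex_on_realI[where f' = "\<lambda>v. 2 / pi - cos v"])
    show "connected {0..pi::real}" by simp
    fix x assume "x \<in> {0..pi::real}"
    show "(g has_real_derivative 2 / pi - cos x) (at x)"
      unfolding g_def by (auto intro!: derivative_eq_intros)
  next
    fix x y :: real assume "x \<in> {0..pi}" "y \<in> {0..pi}" "x \<le> y"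
    then show "2 / pi - cos x \<le> 2 / pi - cos y" using cos_monotone_0_pi_le[of x y] by auto
  qed
  define t where "t = 2 * v / pi"
  have t01: "0 \<le> t" "t \<le> 1" using assms pi_gt_zero by (auto simp: t_def field_simps)
  have e: "(1 - t) *\<^sub>R 0 + t *\<^sub>R (pi/2) = v" unfolding t_def using pi_gt_zero by simp
  have "g v \<le> (1 - t) * g 0 + t * g (pi/2)"
    using convex_onD[OF cv, of t 0 "pi/2"] t01 pi_gt_zero unfolding e by simp
  also have "\<dots> = 0" by (simp add: g_def)
  finally show ?thesis by (simp add: g_def)
qed

definition Dp :: "real \<Rightarrow> real \<Rightarrow> real" where
  "Dp y c = min \<bar>y - c\<bar> (2*pi - \<bar>y - c\<bar>)"

lemma Dp_sin:
  assumes "x \<in> {-pi..pi}" "c \<in> {-pi..pi}"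
  shows "Dp x c \<le> pi * \<bar>sin ((x - c)/2)\<bar>"
proof -
  define v where "v = \<bar>x - c\<bar>"
  have v: "0 \<le> v" "v \<le> 2*pi" using assms by (auto simp: v_def)
  have s: "\<bar>sin ((x - c)/2)\<bar> = sin (v/2)"
  proof (cases "x - c \<ge> 0")
    case True then show ?thesis using v sin_ge_zero[of "v/2"] by (simp add: v_def)
  next
    case False
    then have "v = c - x" by (simp add: v_def)
    then have "(x - c)/2 = - (v/2)" by (simp add: field_simps)
    then show ?thesis using v sin_ge_zero[of "v/2"] by simp
  qed
  show ?thesis
  proof (cases "v \<le> pi")
    case True
    then have "2 * (v/2) / pi \<le> sin (v/2)" using v by (intro jordan) auto
    then have "v \<le> pi * sin (v/2)" using pi_gt_zero by (simp add: field_simps)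
    then show ?thesis unfolding Dp_def s v_def[symmetric] by linarith
  next
    case False
    define u where "u = 2*pi - v"
    have u: "0 \<le> u" "u \<le> pi" using v False by (auto simp: u_def)
    have "v/2 = pi - u/2" by (simp add: u_def field_simps)
    then have "sin (v/2) = sin (pi - u/2)" by (rule arg_cong)
    also have "\<dots> = sin (u/2)" by simp
    finally have e: "sin (v/2) = sin (u/2)" .
    have "2 * (u/2) / pi \<le> sin (u/2)" using u by (intro jordan) auto
    then have "u \<le> pi * sin (v/2)" using pi_gt_zero e by (simp add: field_simps)
    then show ?thesis unfolding Dp_def s v_def[symmetric] u_def by linarith
  qed
qed

definition wK :: "nat \<Rightarrow> nat \<Rightarrow> real \<Rightarrow> real" where
  "wK m j x = JK m (x - tnode (2*m+2) j) / (real (2*m+2) * c0K m)"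

lemma wK_nonneg: "wK m j x \<ge> 0"
  unfolding wK_def using JK_nonneg c0_pos[of m] by simp

lemma wK_sum: "(\<Sum>j<2*m+2. wK m j x) = 1"
  unfolding wK_def using quadJ[of m x] c0_pos[of m]
  by (simp add: sum_divide_distrib[symmetric])

lemma wK_sin2: "(\<Sum>j<2*m+2. wK m j x * (sin ((x - tnode (2*m+2) j)/2))\<^sup>2) \<le> 1 / (real m + 1)^2"
proof -
  define M where "M = 2*m+2"
  have s2: "(sin (u/2))\<^sup>2 = (1 - cos u)/2" for u :: real
    using cos_double_sin[of "u/2"] by simp
  have "(\<Sum>j<M. wK m j x * (sin ((x - tnode M j)/2))\<^sup>2)
      = ((\<Sum>j<M. JK m (x - tnode M j)) - (\<Sum>j<M. cos (x - tnode M j) * JK m (x - tnode M j))) / (2 * (real M * c0K m))"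
    unfolding wK_def s2 M_def[symmetric]
    by (simp add: sum_divide_distrib[symmetric] sum_subtractf[symmetric] algebra_simps)
  also have "\<dots> = (real M * c0K m - real M * PK m) / (2 * (real M * c0K m))"
    unfolding M_def quadJ quadJcos ..
  also have "\<dots> = (c0K m - PK m) / (2 * c0K m)"
  proof -
    have Mp: "real M \<noteq> 0" by (simp add: M_def)
    have "(real M * c0K m - real M * PK m) / (2 * (real M * c0K m)) = (real M * (c0K m - PK m)) / (real M * (2 * c0K m))"
      by (simp add: algebra_simps)
    also have "\<dots> = (c0K m - PK m)/(2*c0K m)" using Mp by (rule mult_divide_mult_cancel_left)
    finally show ?thesis .
  qed
  also have "\<dots> = (real m + 1) / (2 * c0K m)" unfolding c0_P ..
  also have "\<dots> \<le> 1 / (real m + 1)^2"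
  proof -
    have c: "c0K m * (2*real m + 1) \<ge> (real m + 1)^4" by (rule c0_lower)
    have "(real m + 1) * (real m + 1)^2 \<le> 2 * c0K m"
    proof -
      have "(real m + 1)^4 = (real m + 1) * (real m + 1)^2 * (real m + 1)" by (simp add: power_def)
      then have "(real m + 1) * (real m + 1)^2 * (real m + 1) \<le> c0K m * (2*real m + 1)" using c by simp
      also have "\<dots> \<le> 2 * c0K m * (real m + 1)" using c0_pos[of m] by (simp add: algebra_simps)
      finally show ?thesis by (simp add: mult_le_cancel_right)
    qed
    then show ?thesis using c0_pos[of m] by (simp add: field_simps)
  qed
  finally show ?thesis unfolding M_def .
qed

lemma wK_sin: "(\<Sum>j<2*m+2. wK m j x * \<bar>sin ((x - tnode (2*m+2) j)/2)\<bar>) \<le> 1 / (real m + 1)"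
proof -
  define M where "M = 2*m+2"
  define q where "q = real m + 1"
  have q: "q > 0" by (simp add: q_def)
  have am: "\<bar>s\<bar> \<le> q * s\<^sup>2 / 2 + 1 / (2*q)" for s
  proof -
    have "0 \<le> (q * \<bar>s\<bar> - 1)\<^sup>2" by simp
    then have "2 * q * \<bar>s\<bar> \<le> q\<^sup>2 * s\<^sup>2 + 1" by (simp add: power2_eq_square algebra_simps)
    then show ?thesis using q by (simp add: field_simps power2_eq_square)
  qed
  have "(\<Sum>j<M. wK m j x * \<bar>sin ((x - tnode M j)/2)\<bar>)
     \<le> (\<Sum>j<M. wK m j x * (q * (sin ((x - tnode M j)/2))\<^sup>2 / 2 + 1 / (2*q)))"
    by (intro sum_mono mult_left_mono am wK_nonneg)
  also have "\<dots> = q / 2 * (\<Sum>j<M. wK m j x * (sin ((x - tnode M j)/2))\<^sup>2) + 1 / (2*q) * (\<Sum>j<M. wK m j x)"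
    by (simp add: sum_distrib_left sum.distrib algebra_simps)
  also have "\<dots> \<le> q / 2 * (1 / q^2) + 1 / (2*q) * 1"
  proof -
    have A: "(\<Sum>j<M. wK m j x * (sin ((x - tnode M j)/2))\<^sup>2) \<le> 1 / q^2"
      using wK_sin2[of m x] unfolding M_def q_def .
    have B: "(\<Sum>j<M. wK m j x) = 1" using wK_sum[of m x] unfolding M_def .
    show ?thesis using mult_left_mono[OF A, of "q/2"] B q by simp
  qed
  also have "\<dots> = 1 / q" using q by (simp add: field_simps power2_eq_square)
  finally show ?thesis unfolding M_def q_def .
qed



lemma tp_JK:
  assumes "2*m \<le> n"
  shows "(\<lambda>x. JK m (x - t)) \<in> trig_poly n"
proof -
  have "(\<lambda>x. \<Sum>k\<le>2*m. \<Sum>l\<le>2*m. aK m k * aK m l * cos ((real k - real l) * (x - t))) \<in> trig_poly n"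
    using assms by (intro tp_sum tp_scale tp_cos_shift) auto
  then show ?thesis unfolding JK_expand .
qed

lemma modcont_nonneg:
  assumes "continuous_on {-pi..pi} f" "d \<ge> 0"
  shows "modcont f d \<ge> 0"
  using modcont_ge[OF assms(1), of 0 0 d] assms(2) pi_gt_zero by simp

lemma tnode_range:
  assumes "M > 0" "j \<le> M"
  shows "tnode M j \<in> {-pi..pi}"
proof -
  have "real j * (2 * pi / real M) \<le> real M * (2 * pi / real M)"
    using assms pi_gt_zero by (intro mult_right_mono) auto
  then show ?thesis using assms pi_gt_zero unfolding tnode_def by (auto simp: field_simps)
qed

lemma tnode_diff: "tnode M b - tnode M a = (real b - real a) * (2*pi/real M)"
  unfolding tnode_def by (simp add: left_diff_distrib diff_divide_distrib)

lemma chain: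
  assumes cf: "continuous_on {-pi..pi} f" and M: "M > 0" and hd: "2*pi/real M \<le> d"
  shows "a + e \<le> M \<Longrightarrow> \<bar>f (tnode M a) - f (tnode M (a + e))\<bar> \<le> real e * modcont f d"
proof (induction e)
  case 0 then show ?case by simp
next
  case (Suc e)
  have "\<bar>f (tnode M (a + e)) - f (tnode M (a + Suc e))\<bar> \<le> modcont f d"
  proof (rule modcont_ge[OF cf])
    show "tnode M (a + e) \<in> {-pi..pi}" using Suc.prems M by (intro tnode_range) auto
    show "tnode M (a + Suc e) \<in> {-pi..pi}" using Suc.prems M by (intro tnode_range) auto
    have "\<bar>tnode M (a + e) - tnode M (a + Suc e)\<bar> = 2*pi/real M"
      unfolding tnode_diff[symmetric, of M "a + Suc e" "a + e"] tnode_diff using pi_gt_zero M by simp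
    then show "\<bar>tnode M (a + e) - tnode M (a + Suc e)\<bar> \<le> d" using hd by simp
  qed
  then show ?case using Suc by (simp add: algebra_simps)
qed

lemma node_bound:
  assumes cf: "continuous_on {-pi..pi} f" and per: "f (-pi) = f pi"
    and M: "M > 0" and hd: "2*pi/real M \<le> d" and ab: "a \<le> M" "b \<le> M"
  shows "\<bar>f (tnode M a) - f (tnode M b)\<bar> \<le> modcont f d / (2*pi/real M) * Dp (tnode M a) (tnode M b)"
proof -
  define W where "W = modcont f d"
  define h where "h = 2*pi/real M"
  have hp: "h > 0" using M pi_gt_zero by (simp add: h_def)
  have W0: "W \<ge> 0" unfolding W_def by (rule modcont_nonneg[OF cf]) (use hd hp h_def in linarith)
  have key: "\<bar>f (tnode M a) - f (tnode M b)\<bar> \<le> W / h * Dp (tnode M a) (tnode M b)" if ab: "a \<le> b" "b \<le> M" for a b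
  proof -
    have c1: "\<bar>f (tnode M a) - f (tnode M b)\<bar> \<le> real (b - a) * W"
      using chain[OF cf M hd, of a "b - a"] ab unfolding W_def by simp
    have "\<bar>f (tnode M 0) - f (tnode M a)\<bar> \<le> real a * W"
      using chain[OF cf M hd, of 0 a] ab unfolding W_def by simp
    moreover have "\<bar>f (tnode M b) - f (tnode M M)\<bar> \<le> real (M - b) * W"
      using chain[OF cf M hd, of b "M - b"] ab unfolding W_def by simp
    moreover have "f (tnode M 0) = f (tnode M M)" using per M by (simp add: tnode_def)
    ultimately have c2: "\<bar>f (tnode M a) - f (tnode M b)\<bar> \<le> (real M - (real b - real a)) * W"
      using ab by (simp add: algebra_simps of_nat_diff)
    have e1: "tnode M b - tnode M a = (real b - real a) * h" unfolding h_def tnode_diff ..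
    have e2: "(real b - real a) * h \<ge> 0" using ab hp by simp
    have "\<bar>tnode M a - tnode M b\<bar> = (real b - real a) * h" using e1 e2 by (auto simp: abs_if)
    moreover have "2*pi = real M * h" using M by (simp add: h_def)
    ultimately have D: "Dp (tnode M a) (tnode M b) = min ((real b - real a) * h) (real M * h - (real b - real a) * h)"
      unfolding Dp_def by simp
    have P: "\<bar>f (tnode M a) - f (tnode M b)\<bar> \<le> W / h * ((real b - real a) * h)"
      using c1 ab hp by (simp add: of_nat_diff mult.commute)
    have Q: "\<bar>f (tnode M a) - f (tnode M b)\<bar> \<le> W / h * (real M * h - (real b - real a) * h)"
    proof -
      have "W / h * (real M * h - (real b - real a) * h) = (real M - (real b - real a)) * W"
        using hp by (simp add: field_simps)
      then show ?thesis using c2 by simp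
    qed
    show ?thesis unfolding D using P Q by (simp add: min_def)
  qed
  show ?thesis
  proof (cases "a \<le> b")
    case True then show ?thesis using key ab unfolding W_def h_def by simp
  next
    case False
    have "Dp (tnode M a) (tnode M b) = Dp (tnode M b) (tnode M a)" unfolding Dp_def by (simp add: abs_minus_commute)
    moreover have "\<bar>f (tnode M a) - f (tnode M b)\<bar> = \<bar>f (tnode M b) - f (tnode M a)\<bar>" by (simp add: abs_minus_commute)
    ultimately show ?thesis using key[of b a] False ab unfolding W_def h_def by simp
  qed
qed

lemma Dp_concave:
  assumes M: "M > 0" and kM: "k < M" and jM: "j < M"
    and x: "tnode M k \<le> x" "x \<le> tnode M (Suc k)"
  defines "lam \<equiv> (tnode M (Suc k) - x) / (2*pi/real M)"
  shows "lam * Dp (tnode M k) (tnode M j) + (1 - lam) * Dp (tnode M (Suc k)) (tnode M j) \<le> Dp x (tnode M j)"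
proof -
  define h where "h = 2*pi/real M"
  have hp: "h > 0" using M pi_gt_zero by (simp add: h_def)
  have th: "tnode M (Suc k) = tnode M k + h" unfolding tnode_def h_def by (simp add: of_nat_Suc distrib_right add_divide_distrib)
  have xl: "x = lam * tnode M k + (1 - lam) * tnode M (Suc k)"
    unfolding lam_def h_def[symmetric] th using hp by (simp add: field_simps)
  have l01: "0 \<le> lam" "lam \<le> 1" unfolding lam_def h_def[symmetric] using x hp th by (auto simp: field_simps)
  have absx: "\<bar>x - tnode M j\<bar> = lam * \<bar>tnode M k - tnode M j\<bar> + (1 - lam) * \<bar>tnode M (Suc k) - tnode M j\<bar>"
  proof (cases "j \<le> k")
    case True
    then have "tnode M j \<le> tnode M k" unfolding tnode_def using M pi_gt_zero
      by (intro add_left_mono mult_right_mono) auto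
    then show ?thesis using xl l01 th hp x by (simp add: abs_of_nonneg algebra_simps)
  next
    case False
    then have "tnode M (Suc k) \<le> tnode M j" unfolding tnode_def using M pi_gt_zero
      by (intro add_left_mono mult_right_mono) auto
    then show ?thesis using xl l01 th hp x by (simp add: abs_of_nonpos algebra_simps)
  qed
  define A where "A = \<bar>tnode M k - tnode M j\<bar>"
  define B where "B = \<bar>tnode M (Suc k) - tnode M j\<bar>"
  have "lam * min A (2*pi - A) + (1 - lam) * min B (2*pi - B) \<le> min (lam * A + (1 - lam) * B) (2*pi - (lam * A + (1 - lam) * B))"
  proof -
    have "lam * min A (2*pi - A) \<le> lam * A" "lam * min A (2*pi - A) \<le> lam * (2*pi - A)"
      using l01 by (auto intro: mult_left_mono)
    moreover have "(1 - lam) * min B (2*pi - B) \<le> (1 - lam) * B" "(1 - lam) * min B (2*pi - B) \<le> (1 - lam) * (2*pi - B)"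
      using l01 by (auto intro: mult_left_mono)
    ultimately show ?thesis by (simp add: algebra_simps)
  qed
  then show ?thesis unfolding Dp_def absx A_def B_def .
qed

lemma bracket:
  assumes M: "M > 0" and x: "x \<in> {-pi..pi}"
  shows "\<exists>k<M. tnode M k \<le> x \<and> x \<le> tnode M (Suc k)"
proof -
  define h where "h = 2*pi/real M"
  have hp: "h > 0" using M pi_gt_zero by (simp add: h_def)
  define k where "k = min (nat \<lfloor>(x + pi)/h\<rfloor>) (M - 1)"
  have fl: "real_of_int \<lfloor>(x + pi)/h\<rfloor> \<le> (x + pi)/h" "(x + pi)/h < real_of_int \<lfloor>(x + pi)/h\<rfloor> + 1"
    by linarith+
  have nn: "0 \<le> \<lfloor>(x + pi)/h\<rfloor>" using x hp by auto
  have kM: "k < M" using M by (simp add: k_def)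
  have t: "tnode M i = -pi + real i * h" for i unfolding tnode_def h_def ..
  have "real k \<le> (x + pi)/h"
  proof (cases "nat \<lfloor>(x + pi)/h\<rfloor> \<le> M - 1")
    case True then show ?thesis unfolding k_def using fl nn by (simp add: min_def)
  next
    case False
    then have "real k \<le> real (nat \<lfloor>(x + pi)/h\<rfloor>)" unfolding k_def by simp
    also have "\<dots> = real_of_int \<lfloor>(x + pi)/h\<rfloor>" using nn by simp
    finally show ?thesis using fl by linarith
  qed
  then have lo: "tnode M k \<le> x" unfolding t using hp by (simp add: field_simps)
  have hi: "x \<le> tnode M (Suc k)"
  proof (cases "nat \<lfloor>(x + pi)/h\<rfloor> \<le> M - 1")
    case True
    then have "k = nat \<lfloor>(x + pi)/h\<rfloor>" by (simp add: k_def)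
    then have "real (Suc k) = real_of_int \<lfloor>(x + pi)/h\<rfloor> + 1" using nn by simp
    then have "(x + pi)/h \<le> real (Suc k)" using fl by linarith
    then show ?thesis unfolding t using hp by (simp add: field_simps)
  next
    case False
    then have "Suc k = M" using M by (simp add: k_def)
    then show ?thesis unfolding t using x M by (simp add: h_def)
  qed
  show ?thesis using kM lo hi by blast
qed



lemma h_le_d:
  assumes "n \<ge> 1"
  shows "2*pi/real (2*(n div 2)+2) \<le> 2*pi * sqrt 3/(real n + 2)"
proof -
  have s3: "sqrt 3 \<ge> 3/2" by (rule real_le_rsqrt) (simp add: power2_eq_square)
  have "real n \<le> 2 * real (n div 2) + 1"
  proof -
    have "n \<le> 2*(n div 2) + 1" by linarith
    then show ?thesis by linarith
  qed
  moreover have "real n \<ge> 1" using assms by simp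
  ultimately have "real n + 2 \<le> 3 * real (n div 2) + 3" by linarith
  then have "real n + 2 \<le> 3/2 * (2 * real (n div 2) + 2)" by (simp add: algebra_simps)
  also have "\<dots> \<le> sqrt 3 * (2 * real (n div 2) + 2)" using s3 by (intro mult_right_mono) auto
  finally have "real n + 2 \<le> sqrt 3 * (2 * real (n div 2) + 2)" .
  then have "2*pi * (real n + 2) \<le> 2*pi * (sqrt 3 * (2 * real (n div 2) + 2))"
    using pi_gt_zero by (intro mult_left_mono) auto
  moreover have A: "real (2*(n div 2)+2) = 2 * real (n div 2) + 2" by simp
  moreover have Ap: "2 * real (n div 2) + 2 > 0" by simp
  moreover have Bp: "real n + 2 > 0" by simp
  ultimately show ?thesis
    by (simp only: A pos_le_divide_eq[OF Bp] times_divide_eq_left pos_divide_le_eq[OF Ap] mult.assoc)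
qed

lemma jackson:
  assumes cf: "continuous_on {-pi..pi} f" and per: "f (-pi) = f pi" and n: "n \<ge> 1"
  shows "\<exists>p\<in>trig_poly n. \<forall>x\<in>{-pi..pi}. \<bar>f x - p x\<bar> \<le> 2 * modcont f (2*pi * sqrt 3/(real n + 2))"
proof -
  define m where "m = n div 2"
  define M where "M = 2*m+2"
  define d where "d = 2*pi * sqrt 3/(real n + 2)"
  define W where "W = modcont f d"
  define h where "h = 2*pi/real M"
  have Mp: "M > 0" by (simp add: M_def)
  have hp: "h > 0" using pi_gt_zero by (simp add: h_def M_def)
  have hd: "h \<le> d" unfolding h_def d_def M_def m_def using h_le_d[OF n] .
  have hm: "h = pi / (real m + 1)"
  proof -
    have "real M = 2 * real m + 2" by (simp add: M_def)
    moreover have "2 * real m + 2 \<noteq> 0" "real m + 1 \<noteq> 0" by linarith+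
    ultimately show ?thesis unfolding h_def by (simp add: field_simps)
  qed
  have W0: "W \<ge> 0" unfolding W_def using modcont_nonneg[OF cf] hd hp by simp
  define p where "p x = (\<Sum>j<M. f (tnode M j) * wK m j x)" for x
  have ptp: "p \<in> trig_poly n"
  proof -
    have "(\<lambda>x. \<Sum>j<M. (f (tnode M j) / (real (2*m+2) * c0K m)) * JK m (x - tnode M j)) \<in> trig_poly n"
      by (intro tp_sum tp_scale tp_JK) (auto simp: m_def)
    moreover have "p = (\<lambda>x. \<Sum>j<M. (f (tnode M j) / (real (2*m+2) * c0K m)) * JK m (x - tnode M j))"
      unfolding p_def wK_def M_def by (intro ext sum.cong) auto
    ultimately show ?thesis by simp
  qed
  have bound: "\<bar>f x - p x\<bar> \<le> 2 * W" if x: "x \<in> {-pi..pi}" for x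
  proof -
    obtain k where k: "k < M" "tnode M k \<le> x" "x \<le> tnode M (Suc k)" using bracket[OF Mp x] by blast
    define lam where "lam = (tnode M (Suc k) - x) / (2*pi/real M)"
    have th: "tnode M (Suc k) = tnode M k + h" unfolding tnode_def h_def by (simp add: of_nat_Suc distrib_right add_divide_distrib)
    have l01: "0 \<le> lam" "lam \<le> 1" unfolding lam_def h_def[symmetric] using k hp th by (auto simp: field_simps)
    have tk: "tnode M k \<in> {-pi..pi}" "tnode M (Suc k) \<in> {-pi..pi}" using k Mp by (auto intro!: tnode_range simp del: atLeastAtMost_iff)
    define g where "g = lam * f (tnode M k) + (1 - lam) * f (tnode M (Suc k))"
    have E1: "\<bar>f x - g\<bar> \<le> W"
    proof -
      have a: "\<bar>f x - f (tnode M k)\<bar> \<le> W" unfolding W_def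
        using modcont_ge[OF cf x tk(1), of d] k th hd by simp
      have b: "\<bar>f x - f (tnode M (Suc k))\<bar> \<le> W" unfolding W_def
        using modcont_ge[OF cf x tk(2), of d] k th hd by simp
      have "f x - g = lam * (f x - f (tnode M k)) + (1 - lam) * (f x - f (tnode M (Suc k)))"
        unfolding g_def by (simp add: algebra_simps)
      then have "\<bar>f x - g\<bar> \<le> lam * \<bar>f x - f (tnode M k)\<bar> + (1 - lam) * \<bar>f x - f (tnode M (Suc k))\<bar>"
        using l01 by (simp add: abs_triangle_ineq[THEN order_trans] abs_mult)
      also have "\<dots> \<le> lam * W + (1 - lam) * W"
        using l01 a b by (intro add_mono mult_left_mono) auto
      finally show ?thesis by (simp add: algebra_simps)
    qed
    have E2: "\<bar>g - f (tnode M j)\<bar> \<le> W / h * (pi * \<bar>sin ((x - tnode M j)/2)\<bar>)" if j: "j < M" for j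
    proof -
      have a: "\<bar>f (tnode M k) - f (tnode M j)\<bar> \<le> W / h * Dp (tnode M k) (tnode M j)"
        unfolding W_def h_def using node_bound[OF cf per Mp _, of d k j] hd k j unfolding h_def by simp
      have b: "\<bar>f (tnode M (Suc k)) - f (tnode M j)\<bar> \<le> W / h * Dp (tnode M (Suc k)) (tnode M j)"
        unfolding W_def h_def using node_bound[OF cf per Mp _, of d "Suc k" j] hd k j unfolding h_def by simp
      have "g - f (tnode M j) = lam * (f (tnode M k) - f (tnode M j)) + (1 - lam) * (f (tnode M (Suc k)) - f (tnode M j))"
        unfolding g_def by (simp add: algebra_simps)
      then have "\<bar>g - f (tnode M j)\<bar> \<le> lam * \<bar>f (tnode M k) - f (tnode M j)\<bar> + (1 - lam) * \<bar>f (tnode M (Suc k)) - f (tnode M j)\<bar>"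
        using l01 by (simp add: abs_triangle_ineq[THEN order_trans] abs_mult)
      also have "\<dots> \<le> lam * (W / h * Dp (tnode M k) (tnode M j)) + (1 - lam) * (W / h * Dp (tnode M (Suc k)) (tnode M j))"
        using l01 a b by (intro add_mono mult_left_mono) auto
      also have "\<dots> = W / h * (lam * Dp (tnode M k) (tnode M j) + (1 - lam) * Dp (tnode M (Suc k)) (tnode M j))"
        by (simp only: distrib_left mult.left_commute)
      also have "\<dots> \<le> W / h * Dp x (tnode M j)"
        using Dp_concave[OF Mp k(1) j k(2) k(3)] W0 hp unfolding lam_def
        by (intro mult_left_mono) auto
      also have "\<dots> \<le> W / h * (pi * \<bar>sin ((x - tnode M j)/2)\<bar>)"
        using Dp_sin[OF x tnode_range[OF Mp, of j]] j W0 hp by (intro mult_left_mono) auto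
      finally show ?thesis .
    qed
    have ws: "(\<Sum>j<M. wK m j x) = 1" using wK_sum[of m x] unfolding M_def .
    have "(\<Sum>j<M. wK m j x * (g - f (tnode M j))) = g * (\<Sum>j<M. wK m j x) - p x"
      unfolding p_def by (simp add: right_diff_distrib sum_subtractf sum_distrib_left mult.commute)
    then have "g - p x = (\<Sum>j<M. wK m j x * (g - f (tnode M j)))" using ws by simp
    then have "\<bar>g - p x\<bar> \<le> (\<Sum>j<M. wK m j x * \<bar>g - f (tnode M j)\<bar>)"
      by (simp add: sum_abs[THEN order_trans] abs_mult wK_nonneg)
    also have "\<dots> \<le> (\<Sum>j<M. wK m j x * (W / h * (pi * \<bar>sin ((x - tnode M j)/2)\<bar>)))"
      using E2 by (intro sum_mono mult_left_mono wK_nonneg) auto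
    also have "\<dots> = W / h * pi * (\<Sum>j<M. wK m j x * \<bar>sin ((x - tnode M j)/2)\<bar>)"
      by (simp add: sum_distrib_left algebra_simps)
    also have "\<dots> \<le> W / h * pi * (1 / (real m + 1))"
      using wK_sin[of m x] W0 hp pi_gt_zero unfolding M_def by (intro mult_left_mono) auto
    also have "\<dots> = W"
    proof -
      have q: "real m + 1 > 0" by simp
      have "pi + pi * real m = pi * (real m + 1)" by (simp add: algebra_simps)
      then have "pi + pi * real m \<noteq> 0" using q pi_gt_zero by simp
      then show ?thesis unfolding hm using pi_gt_zero q by (simp add: field_simps)
    qed
    finally have "\<bar>g - p x\<bar> \<le> W" .
    then show ?thesis using E1 by linarith
  qed
  show ?thesis using ptp bound unfolding W_def d_def by blast
qed



locale frac =
  fixes N :: nat and xs :: "nat \<Rightarrow> real" and \<alpha> :: "nat \<Rightarrow> real" and r b :: "real \<Rightarrow> real"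
  assumes N: "N \<ge> 1" and part: "partition_pi N xs" and al: "\<forall>i\<in>{1..N}. \<bar>\<alpha> i\<bar> < 1"
    and rc: "continuous_on {-pi..pi} r" and bc: "continuous_on {-pi..pi} b"
    and bl: "b (-pi) = r (-pi)" and br: "b pi = r pi" and rper: "r (-pi) = r pi"
begin

lemma x0: "xs 0 = -pi" and xN: "xs N = pi" and step: "\<And>i. i < N \<Longrightarrow> xs i < xs (Suc i)"
  using part unfolding partition_pi_def by auto

lemma mono: "i < j \<Longrightarrow> j \<le> N \<Longrightarrow> xs i < xs j"
proof (induction j)
  case 0 then show ?case by simp
next
  case (Suc j)
  show ?case
  proof (cases "i = j")
    case True then show ?thesis using step Suc by simp
  next
    case False
    then have "xs i < xs j" using Suc by simp
    also have "xs j < xs (Suc j)" using step Suc by simp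
    finally show ?thesis .
  qed
qed

lemma mono_le: "i \<le> j \<Longrightarrow> j \<le> N \<Longrightarrow> xs i \<le> xs j"
  using mono by (cases "i = j") (auto simp: less_imp_le le_neq_implies_less)

lemma Irange:
  assumes i: "i \<in> {1..N}" and y: "y \<in> {xs (i-1)..xs i}"
  shows "y \<in> {-pi..pi}"
proof -
  have "xs 0 \<le> xs (i-1)" by (rule mono_le) (use i in auto)
  then have "-pi \<le> xs (i-1)" using x0 by simp
  moreover have "xs i \<le> pi" using mono_le[of i N] xN i by simp
  ultimately show ?thesis using y by auto
qed

lemma len_pos: "i \<in> {1..N} \<Longrightarrow> xs i - xs (i-1) > 0"
  using mono[of "i-1" i] by auto

lemma cover:
  assumes "x \<in> {-pi..pi}"
  shows "\<exists>i\<in>{1..N}. x \<in> {xs (i-1)..xs i}"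
proof -
  define i where "i = (LEAST i. x \<le> xs i)"
  have ex: "x \<le> xs N" using assms xN by simp
  have xi: "x \<le> xs i" unfolding i_def by (rule LeastI[of _ N]) (rule ex)
  have iN: "i \<le> N" unfolding i_def by (rule Least_le) (rule ex)
  show ?thesis
  proof (cases "i = 0")
    case True
    then have "x = -pi" using xi x0 assms by simp
    then show ?thesis using N mono[of 0 1] x0 by (intro bexI[of _ 1]) auto
  next
    case False
    then have "\<not> x \<le> xs (i-1)" unfolding i_def by (intro not_less_Least) (simp add: i_def[symmetric])
    then show ?thesis using False xi iN by (intro bexI[of _ i]) auto
  qed
qed

lemma Linv_l: "Linv xs i (xs (i-1)) = -pi" unfolding Linv_def by simp
lemma Linv_r: "i \<in> {1..N} \<Longrightarrow> Linv xs i (xs i) = pi"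
  unfolding Linv_def using len_pos[of i] by simp

lemma Linv_range:
  assumes "i \<in> {1..N}" "y \<in> {xs (i-1)..xs i}"
  shows "Linv xs i y \<in> {-pi..pi}"
proof -
  define l where "l = xs i - xs (i-1)"
  have l: "l > 0" using len_pos assms by (simp add: l_def)
  define t where "t = (y - xs (i-1)) / l"
  have t0: "0 \<le> t" "t \<le> 1" using assms l by (auto simp: l_def t_def field_simps)
  have a: "0 \<le> 2*pi*t" by (rule mult_nonneg_nonneg) (use pi_gt_zero t0 in auto)
  have b: "2*pi*t \<le> 2*pi" using mult_left_mono[OF t0(2), of "2*pi"] pi_gt_zero by simp
  have "Linv xs i y = -pi + 2*pi*t" unfolding Linv_def t_def l_def by simp
  then show ?thesis using a b by simp
qed

lemma Linv_cont: "continuous_on S (Linv xs i)"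
proof -
  have e: "Linv xs i = (\<lambda>y. -pi + (y - xs(i-1)) * (2*pi / (xs i - xs (i-1))))"
    unfolding Linv_def by (auto simp: fun_eq_iff)
  show ?thesis unfolding e by (intro continuous_intros)
qed

definition an where "an = alpha_norm N \<alpha>"

lemma alpha_le: "i \<in> {1..N} \<Longrightarrow> \<bar>\<alpha> i\<bar> \<le> an"
  unfolding an_def alpha_norm_def by (intro Max_ge) auto

lemma an_lt1: "an < 1"
  unfolding an_def alpha_norm_def using al N by (subst Max_less_iff) auto

lemma an_ge0: "an \<ge> 0"
  using alpha_le[of 1] N by auto

definition F where "F \<phi> i y = r y + \<alpha> i * (\<phi> (Linv xs i y) - b (Linv xs i y))"

lemma F_end:
  assumes "\<phi> (-pi) = b (-pi)" "\<phi> pi = b pi" "i \<in> {1..N}" "y = xs (i-1) \<or> y = xs i"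
  shows "F \<phi> i y = r y"
  using assms Linv_l[of i] Linv_r[of i] unfolding F_def by auto

lemma overlap:
  assumes "i \<in> {1..N}" "j \<in> {1..N}" "y \<in> {xs (i-1)..xs i}" "y \<in> {xs (j-1)..xs j}" "i \<noteq> j"
  shows "y = xs (i-1) \<or> y = xs i"
proof (cases "i < j")
  case True
  then have "xs i \<le> xs (j-1)" using assms by (intro mono_le) auto
  then show ?thesis using assms by auto
next
  case False
  then have "xs j \<le> xs (i-1)" using assms by (intro mono_le) auto
  then show ?thesis using assms by auto
qed

definition idx where "idx y = (SOME i. i \<in> {1..N} \<and> y \<in> {xs (i-1)..xs i})"
definition G where "G \<phi> y = F \<phi> (idx y) y"

lemma G_eq:
  assumes "\<phi> (-pi) = b (-pi)" "\<phi> pi = b pi" "i \<in> {1..N}" "y \<in> {xs (i-1)..xs i}"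
  shows "G \<phi> y = F \<phi> i y"
proof -
  have j: "idx y \<in> {1..N} \<and> y \<in> {xs (idx y - 1)..xs (idx y)}"
    unfolding idx_def by (rule someI[of _ i]) (use assms in auto)
  show ?thesis
  proof (cases "idx y = i")
    case True then show ?thesis unfolding G_def by simp
  next
    case False
    have e1: "y = xs (i-1) \<or> y = xs i" using overlap[of i "idx y" y] assms j False by auto
    have e2: "y = xs (idx y - 1) \<or> y = xs (idx y)" using overlap[of "idx y" i y] assms j False by auto
    show ?thesis unfolding G_def using F_end[OF assms(1,2) _ e2] F_end[OF assms(1,2,3) e1] j by simp
  qed
qed

lemma F_cont:
  assumes "continuous_on {-pi..pi} \<phi>" "i \<in> {1..N}"
  shows "continuous_on {xs (i-1)..xs i} (F \<phi> i)"
proof -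
  have sub: "{xs (i-1)..xs i} \<subseteq> {-pi..pi}" using Irange[OF assms(2)] by auto
  have im: "Linv xs i ` {xs (i-1)..xs i} \<subseteq> {-pi..pi}" using Linv_range[OF assms(2)] by auto
  have c1: "continuous_on {xs (i-1)..xs i} (\<lambda>y. \<phi> (Linv xs i y))"
    by (rule continuous_on_compose2[OF assms(1) Linv_cont im])
  have c2: "continuous_on {xs (i-1)..xs i} (\<lambda>y. b (Linv xs i y))"
    by (rule continuous_on_compose2[OF bc Linv_cont im])
  have c3: "continuous_on {xs (i-1)..xs i} r" using continuous_on_subset[OF rc sub] .
  show ?thesis unfolding F_def by (intro continuous_intros c1 c2 c3)
qed

lemma union_I: "(\<Union>i\<in>{1..N}. {xs (i-1)..xs i}) = {-pi..pi}"
  using cover Irange by blast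

lemma G_cont:
  assumes "continuous_on {-pi..pi} \<phi>" "\<phi> (-pi) = b (-pi)" "\<phi> pi = b pi"
  shows "continuous_on {-pi..pi} (G \<phi>)"
proof -
  have "continuous_on (\<Union>i\<in>{1..N}. {xs (i-1)..xs i}) (G \<phi>)"
  proof (rule continuous_on_closed_Union)
    fix i assume i: "i \<in> {1..N}"
    show "continuous_on {xs (i-1)..xs i} (G \<phi>)"
      by (rule continuous_on_eq[OF F_cont[OF assms(1) i]]) (simp add: G_eq[OF assms(2,3) i])
  qed auto
  then show ?thesis unfolding union_I .
qed

end



context frac
begin

definition P where "P g \<longleftrightarrow> continuous_on {-pi..pi} g
      \<and> (\<forall>x. x \<notin> {-pi..pi} \<longrightarrow> g x = 0)
      \<and> (\<forall>i\<in>{1..N}. \<forall>x\<in>{xs (i - 1)..xs i}.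
            g x = r x + \<alpha> i * (g (Linv xs i x) - b (Linv xs i x)))"

lemma exists_fix: "\<exists>g. P g"
proof -
  define clamp where "clamp x = max (-pi) (min pi x)" for x :: real
  have cl_in: "clamp x \<in> {-pi..pi}" for x unfolding clamp_def using pi_gt_zero by auto
  have cl_id: "x \<in> {-pi..pi} \<Longrightarrow> clamp x = x" for x unfolding clamp_def by auto
  have cl_cont: "continuous_on UNIV clamp" unfolding clamp_def by (intro continuous_intros)
  define S :: "(real \<Rightarrow>\<^sub>C real) set" where "S = PiC {-pi, pi} (\<lambda>t. {r t})"
  have memS: "\<phi> \<in> S \<longleftrightarrow> apply_bcontfun \<phi> (-pi) = r (-pi) \<and> apply_bcontfun \<phi> pi = r pi" for \<phi>
    unfolding S_def mem_PiC_iff Pi_def by auto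
  define T where "T \<phi> = Bcontfun (\<lambda>x. G (apply_bcontfun \<phi>) (clamp x))" for \<phi>
  have inb: "(\<lambda>x. G (apply_bcontfun \<phi>) (clamp x)) \<in> bcontfun" if "\<phi> \<in> S" for \<phi>
  proof -
    have e: "apply_bcontfun \<phi> (-pi) = b (-pi)" "apply_bcontfun \<phi> pi = b pi" using that memS bl br by auto
    have Gc: "continuous_on {-pi..pi} (G (apply_bcontfun \<phi>))"
      by (rule G_cont[OF _ e]) simp
    have c: "continuous_on UNIV (\<lambda>x. G (apply_bcontfun \<phi>) (clamp x))"
      by (rule continuous_on_compose2[OF Gc cl_cont]) (use cl_in in auto)
    have "bounded (G (apply_bcontfun \<phi>) ` {-pi..pi})"
      by (rule compact_imp_bounded, rule compact_continuous_image[OF Gc]) simp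
    moreover have "range (\<lambda>x. G (apply_bcontfun \<phi>) (clamp x)) \<subseteq> G (apply_bcontfun \<phi>) ` {-pi..pi}"
      using cl_in by auto
    ultimately have "bounded (range (\<lambda>x. G (apply_bcontfun \<phi>) (clamp x)))" by (rule bounded_subset)
    then show ?thesis using c unfolding bcontfun_def by simp
  qed
  have Tapp: "apply_bcontfun (T \<phi>) x = G (apply_bcontfun \<phi>) (clamp x)" if "\<phi> \<in> S" for \<phi> x
    unfolding T_def using Bcontfun_inverse[OF inb[OF that]] by simp
  have x1: "xs 1 > -pi" using mono[of 0 1] N x0 by simp
  have xN1: "xs (N-1) < pi" using mono[of "N-1" N] N xN by simp
  have TS: "T ` S \<subseteq> S"
  proof
    fix \<psi> assume "\<psi> \<in> T ` S"
    then obtain \<phi> where \<phi>: "\<phi> \<in> S" "\<psi> = T \<phi>" by auto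
    have e: "apply_bcontfun \<phi> (-pi) = b (-pi)" "apply_bcontfun \<phi> pi = b pi" using \<phi> memS bl br by auto
    have "apply_bcontfun (T \<phi>) (-pi) = G (apply_bcontfun \<phi>) (-pi)" using Tapp[OF \<phi>(1)] cl_id[of "-pi"] pi_gt_zero by simp
    also have "\<dots> = F (apply_bcontfun \<phi>) 1 (-pi)" using N x0 x1 by (intro G_eq[OF e]) auto
    also have "\<dots> = r (-pi)" using N x0 by (intro F_end[OF e]) auto
    finally have 1: "apply_bcontfun (T \<phi>) (-pi) = r (-pi)" .
    have "apply_bcontfun (T \<phi>) pi = G (apply_bcontfun \<phi>) pi" using Tapp[OF \<phi>(1)] cl_id[of "pi"] pi_gt_zero by simp
    also have "\<dots> = F (apply_bcontfun \<phi>) N pi" using N xN xN1 by (intro G_eq[OF e]) auto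
    also have "\<dots> = r pi" using N xN by (intro F_end[OF e]) auto
    finally have 2: "apply_bcontfun (T \<phi>) pi = r pi" .
    show "\<psi> \<in> S" using 1 2 \<phi> memS by simp
  qed
  have contr: "dist (T \<phi>) (T \<psi>) \<le> an * dist \<phi> \<psi>" if "\<phi> \<in> S" "\<psi> \<in> S" for \<phi> \<psi>
  proof (rule dist_bound)
    fix x
    have e1: "apply_bcontfun \<phi> (-pi) = b (-pi)" "apply_bcontfun \<phi> pi = b pi" using that memS bl br by auto
    have e2: "apply_bcontfun \<psi> (-pi) = b (-pi)" "apply_bcontfun \<psi> pi = b pi" using that memS bl br by auto
    obtain i where i: "i \<in> {1..N}" "clamp x \<in> {xs (i-1)..xs i}" using cover[OF cl_in] by blast
    have "apply_bcontfun (T \<phi>) x - apply_bcontfun (T \<psi>) x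
        = \<alpha> i * (apply_bcontfun \<phi> (Linv xs i (clamp x)) - apply_bcontfun \<psi> (Linv xs i (clamp x)))"
      unfolding Tapp[OF that(1)] Tapp[OF that(2)] G_eq[OF e1 i] G_eq[OF e2 i] F_def by (simp add: algebra_simps)
    then have "dist (apply_bcontfun (T \<phi>) x) (apply_bcontfun (T \<psi>) x)
        = \<bar>\<alpha> i\<bar> * dist (apply_bcontfun \<phi> (Linv xs i (clamp x))) (apply_bcontfun \<psi> (Linv xs i (clamp x)))"
      by (simp add: dist_real_def abs_mult)
    also have "\<dots> \<le> an * dist \<phi> \<psi>"
      using alpha_le[OF i(1)] dist_bounded[of \<phi> _ \<psi>] by (intro mult_mono) auto
    finally show "dist (apply_bcontfun (T \<phi>) x) (apply_bcontfun (T \<psi>) x) \<le> an * dist \<phi> \<psi>" .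
  qed
  have Scl: "complete S" unfolding complete_eq_closed S_def by (intro closed_PiC) auto
  have Sne: "S \<noteq> {}"
  proof -
    have "const_bcontfun (r (-pi)) \<in> S" unfolding memS using rper by (simp add: const_bcontfun.rep_eq)
    then show ?thesis by auto
  qed
  obtain \<phi> where \<phi>: "\<phi> \<in> S" "T \<phi> = \<phi>"
    using Banach_fix[OF Scl Sne an_ge0 an_lt1 TS contr] by blast
  define g where "g x = (if x \<in> {-pi..pi} then apply_bcontfun \<phi> x else 0)" for x
  have e: "apply_bcontfun \<phi> (-pi) = b (-pi)" "apply_bcontfun \<phi> pi = b pi" using \<phi> memS bl br by auto
  have "P g" unfolding P_def
  proof (intro conjI allI impI ballI)
    show "continuous_on {-pi..pi} g"
      by (rule continuous_on_eq[of _ "apply_bcontfun \<phi>"]) (auto simp: g_def)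
  next
    fix x :: real assume "x \<notin> {-pi..pi}" then show "g x = 0" by (auto simp: g_def)
  next
    fix i x assume i: "i \<in> {1..N}" and x: "x \<in> {xs (i-1)..xs i}"
    have xr: "x \<in> {-pi..pi}" using Irange[OF i x] .
    have Lr: "Linv xs i x \<in> {-pi..pi}" using Linv_range[OF i x] .
    have "g x = apply_bcontfun (T \<phi>) x" using \<phi>(2) xr by (simp add: g_def)
    also have "\<dots> = G (apply_bcontfun \<phi>) x" using Tapp[OF \<phi>(1)] cl_id[OF xr] by simp
    also have "\<dots> = F (apply_bcontfun \<phi>) i x" using G_eq[OF e i x] .
    also have "\<dots> = r x + \<alpha> i * (g (Linv xs i x) - b (Linv xs i x))"
      unfolding F_def using Lr by (simp add: g_def)
    finally show "g x = r x + \<alpha> i * (g (Linv xs i x) - b (Linv xs i x))" .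
  qed
  then show ?thesis by blast
qed

lemma P_unique:
  assumes "P g1" "P g2"
  shows "g1 = g2"
proof -
  define h where "h x = g1 x - g2 x" for x
  have hc: "continuous_on {-pi..pi} h" using assms unfolding P_def h_def by (auto intro: continuous_intros)
  have hb: "\<bar>h x\<bar> \<le> an * supn h" if x: "x \<in> {-pi..pi}" for x
  proof -
    obtain i where i: "i \<in> {1..N}" "x \<in> {xs (i-1)..xs i}" using cover[OF x] by blast
    have e1: "g1 x = r x + \<alpha> i * (g1 (Linv xs i x) - b (Linv xs i x))" using assms(1) i unfolding P_def by blast
    have e2: "g2 x = r x + \<alpha> i * (g2 (Linv xs i x) - b (Linv xs i x))" using assms(2) i unfolding P_def by blast
    have "h x = \<alpha> i * h (Linv xs i x)"
      unfolding h_def using e1 e2 by (simp add: algebra_simps)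
    then have "\<bar>h x\<bar> = \<bar>\<alpha> i\<bar> * \<bar>h (Linv xs i x)\<bar>" by (simp add: abs_mult)
    also have "\<dots> \<le> an * supn h"
      using alpha_le[OF i(1)] supn_ge[OF hc Linv_range[OF i]] by (intro mult_mono) auto
    finally show ?thesis .
  qed
  have "supn h \<le> an * supn h" by (rule supn_le) (rule hb)
  moreover have "supn h \<ge> 0" by (rule supn_nonneg[OF hc])
  ultimately have s0: "supn h = 0" using an_lt1 an_ge0
    by (metis mult_le_cancel_right1 not_le order.antisym)
  show ?thesis
  proof
    fix x
    show "g1 x = g2 x"
    proof (cases "x \<in> {-pi..pi}")
      case True
      then have "\<bar>h x\<bar> \<le> 0" using hb[OF True] s0 by simp
      then show ?thesis by (simp add: h_def)
    next
      case False then show ?thesis using assms unfolding P_def by auto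
    qed
  qed
qed

lemma fractal_P: "P (fractal_fun N xs \<alpha> b r)"
proof -
  obtain g where g: "P g" using exists_fix by blast
  have "fractal_fun N xs \<alpha> b r = g"
    unfolding fractal_fun_def P_def[symmetric] using g P_unique by blast
  then show ?thesis using g by simp
qed

lemma fractal_bound:
  assumes x: "x \<in> {-pi..pi}"
  shows "\<bar>fractal_fun N xs \<alpha> b r x - r x\<bar> \<le> an / (1 - an) * supn (\<lambda>x. r x - b x)"
proof -
  define g where "g = fractal_fun N xs \<alpha> b r"
  have Pg: "P g" unfolding g_def by (rule fractal_P)
  define h where "h x = g x - r x" for x
  define e where "e x = r x - b x" for x
  have hc: "continuous_on {-pi..pi} h" using Pg rc unfolding P_def h_def by (auto intro: continuous_intros)
  have ec: "continuous_on {-pi..pi} e" using bc rc unfolding e_def by (auto intro: continuous_intros)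
  have hb: "\<bar>h y\<bar> \<le> an * (supn h + supn e)" if y: "y \<in> {-pi..pi}" for y
  proof -
    obtain i where i: "i \<in> {1..N}" "y \<in> {xs (i-1)..xs i}" using cover[OF y] by blast
    have e1: "g y = r y + \<alpha> i * (g (Linv xs i y) - b (Linv xs i y))" using Pg i unfolding P_def by blast
    have "h y = \<alpha> i * (h (Linv xs i y) + e (Linv xs i y))"
      unfolding h_def e_def using e1 by (simp add: algebra_simps)
    then have "\<bar>h y\<bar> = \<bar>\<alpha> i\<bar> * \<bar>h (Linv xs i y) + e (Linv xs i y)\<bar>" by (simp add: abs_mult)
    also have "\<dots> \<le> an * (supn h + supn e)"
    proof (intro mult_mono)
      show "\<bar>\<alpha> i\<bar> \<le> an" using alpha_le[OF i(1)] .
      have "\<bar>h (Linv xs i y)\<bar> \<le> supn h" using supn_ge[OF hc Linv_range[OF i]] .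
      moreover have "\<bar>e (Linv xs i y)\<bar> \<le> supn e" using supn_ge[OF ec Linv_range[OF i]] .
      ultimately show "\<bar>h (Linv xs i y) + e (Linv xs i y)\<bar> \<le> supn h + supn e" by linarith
    qed (use an_ge0 supn_nonneg[OF hc] supn_nonneg[OF ec] in auto)
    finally show ?thesis .
  qed
  have "supn h \<le> an * (supn h + supn e)" by (rule supn_le) (rule hb)
  then have "supn h * (1 - an) \<le> an * supn e" by (simp add: algebra_simps)
  then have "supn h \<le> an * supn e / (1 - an)" using an_lt1 by (simp add: field_simps)
  moreover have "\<bar>h x\<bar> \<le> supn h" using supn_ge[OF hc x] .
  ultimately show ?thesis unfolding h_def g_def e_def by simp
qed

lemma fractal_cont: "continuous_on {-pi..pi} (fractal_fun N xs \<alpha> b r)"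
  using fractal_P unfolding P_def by simp

end



lemma tp_one: "(\<lambda>x. 1) \<in> trig_poly n"
  using tp_cos[of 0 n] by simp

lemma trig_rat_C2pi:
  assumes "r \<in> trig_rat m n"
  shows "r \<in> C2pi"
proof -
  obtain p q where r: "r = (\<lambda>x. p x / q x)" and p: "p \<in> trig_poly m" and q: "q \<in> trig_poly n"
    and qp: "\<forall>x\<in>{-pi..pi}. q x > 0"
    using assms unfolding trig_rat_def by blast
  have pc: "continuous_on {-pi..pi} p" using continuous_on_subset[OF tp_cont[OF p]] by simp
  have qc: "continuous_on {-pi..pi} q" using continuous_on_subset[OF tp_cont[OF q]] by simp
  have "continuous_on {-pi..pi} r" unfolding r using qp by (intro continuous_on_divide pc qc) auto
  moreover have "r (-pi) = r pi" unfolding r using tp_per[OF p] tp_per[OF q] by simp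
  ultimately show ?thesis unfolding C2pi_def by simp
qed

lemma IdL_bound:
  assumes adm: "admissible_L L" and rC: "r \<in> C2pi"
  shows "supn (\<lambda>x. r x - L r x) \<le> IdL_norm L * supn r" and "IdL_norm L \<ge> 0"
proof -
  have LC: "\<And>f. f \<in> C2pi \<Longrightarrow> L f \<in> C2pi" using adm unfolding admissible_L_def by blast
  have lin: "\<And>f g a b x. f \<in> C2pi \<Longrightarrow> g \<in> C2pi \<Longrightarrow> x \<in> {-pi..pi} \<Longrightarrow>
        L (\<lambda>t. a * f t + b * g t) x = a * L f x + b * L g x"
    using adm unfolding admissible_L_def by blast
  obtain B where B: "\<And>f. f \<in> C2pi \<Longrightarrow> supn (L f) \<le> B * supn f"
    using adm unfolding admissible_L_def by blast
  have cont: "\<And>f. f \<in> C2pi \<Longrightarrow> continuous_on {-pi..pi} f" unfolding C2pi_def by blast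
  define Y where "Y = {supn (\<lambda>x. f x - L f x) | f. f \<in> C2pi \<and> supn f \<le> 1}"
  have bdd: "bdd_above Y" unfolding bdd_above_def
  proof (intro exI[of _ "1 + \<bar>B\<bar>"] ballI)
    fix y assume "y \<in> Y"
    then obtain f where f: "y = supn (\<lambda>x. f x - L f x)" "f \<in> C2pi" "supn f \<le> 1" unfolding Y_def by blast
    have s0: "supn f \<ge> 0" using supn_nonneg[OF cont[OF f(2)]] .
    have "y \<le> supn f + supn (L f)" unfolding f(1)
    proof (rule supn_le)
      fix x assume x: "x \<in> {-pi..pi}"
      have "\<bar>f x\<bar> \<le> supn f" using supn_ge[OF cont[OF f(2)] x] .
      moreover have "\<bar>L f x\<bar> \<le> supn (L f)" using supn_ge[OF cont[OF LC[OF f(2)]] x] .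
      ultimately show "\<bar>f x - L f x\<bar> \<le> supn f + supn (L f)" by linarith
    qed
    also have "supn (L f) \<le> B * supn f" using B[OF f(2)] .
    also have "B * supn f \<le> \<bar>B\<bar> * 1"
    proof -
      have "B * supn f \<le> \<bar>B\<bar> * supn f" using s0 by (intro mult_right_mono) auto
      also have "\<dots> \<le> \<bar>B\<bar> * 1" using f(3) by (intro mult_left_mono) auto
      finally show ?thesis .
    qed
    finally show "y \<le> 1 + \<bar>B\<bar>" using f(3) by linarith
  qed
  have z: "(\<lambda>x::real. 0::real) \<in> C2pi" unfolding C2pi_def by simp
  have zs: "supn (\<lambda>x::real. 0::real) \<le> 1" by (rule supn_le) simp
  have "\<exists>f. supn (\<lambda>x. 0 - L (\<lambda>x. 0) x) = supn (\<lambda>x. f x - L f x) \<and> f \<in> C2pi \<and> supn f \<le> 1"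
    using z zs by (intro exI[of _ "\<lambda>x. 0"]) simp
  then have "supn (\<lambda>x. 0 - L (\<lambda>x. 0) x) \<in> Y" unfolding Y_def by simp
  moreover have "supn (\<lambda>x. 0 - L (\<lambda>x. 0) x) \<ge> 0"
    by (rule supn_nonneg) (intro continuous_intros cont[OF LC[OF z]])
  ultimately have "IdL_norm L \<ge> 0" unfolding IdL_norm_def Y_def[symmetric]
    using cSup_upper[OF _ bdd] by fastforce
  then show K0: "IdL_norm L \<ge> 0" .
  define s where "s = supn r"
  have s0: "s \<ge> 0" unfolding s_def using supn_nonneg[OF cont[OF rC]] .
  show "supn (\<lambda>x. r x - L r x) \<le> IdL_norm L * supn r"
  proof (cases "s = 0")
    case True
    have "supn (L r) \<le> 0" using B[OF rC] True unfolding s_def by simp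
    show ?thesis
    proof (rule supn_le)
      fix x assume x: "x \<in> {-pi..pi}"
      have "\<bar>r x\<bar> \<le> 0" using supn_ge[OF cont[OF rC] x] True unfolding s_def by simp
      moreover have "\<bar>L r x\<bar> \<le> 0" using supn_ge[OF cont[OF LC[OF rC]] x] \<open>supn (L r) \<le> 0\<close> by simp
      ultimately show "\<bar>r x - L r x\<bar> \<le> IdL_norm L * supn r" using True unfolding s_def by simp
    qed
  next
    case False
    then have sp: "s > 0" using s0 by simp
    define r' where "r' t = (1/s) * r t + 0 * r t" for t
    have "continuous_on {-pi..pi} r'" unfolding r'_def by (intro continuous_intros cont[OF rC])
    moreover have "r' (-pi) = r' pi" using rC unfolding C2pi_def r'_def by simp
    ultimately have r'C: "r' \<in> C2pi" unfolding C2pi_def by simp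
    have r's: "supn r' \<le> 1"
    proof (rule supn_le)
      fix x assume x: "x \<in> {-pi..pi}"
      have "\<bar>r x\<bar> \<le> s" using supn_ge[OF cont[OF rC] x] unfolding s_def .
      then show "\<bar>r' x\<bar> \<le> 1" using sp by (simp add: r'_def abs_mult field_simps)
    qed
    have inY: "supn (\<lambda>x. r' x - L r' x) \<in> Y" unfolding Y_def using r'C r's by blast
    have le: "supn (\<lambda>x. r' x - L r' x) \<le> IdL_norm L" unfolding IdL_norm_def Y_def[symmetric]
      by (rule cSup_upper[OF inY bdd])
    show ?thesis
    proof (rule supn_le)
      fix x assume x: "x \<in> {-pi..pi}"
      have Lr': "L r' x = (1/s) * L r x + 0 * L r x" unfolding r'_def by (rule lin[OF rC rC x])
      have "r x - L r x = s * (r' x - L r' x)" unfolding Lr' using sp by (simp add: r'_def field_simps)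
      then have "\<bar>r x - L r x\<bar> = s * \<bar>r' x - L r' x\<bar>" using sp by (simp add: abs_mult)
      also have "\<dots> \<le> s * supn (\<lambda>x. r' x - L r' x)"
        using supn_ge[of "\<lambda>x. r' x - L r' x" x] cont[OF r'C] cont[OF LC[OF r'C]] x sp
        by (intro mult_left_mono) (auto intro: continuous_intros)
      also have "\<dots> \<le> s * IdL_norm L" using le sp by (intro mult_left_mono) auto
      finally show "\<bar>r x - L r x\<bar> \<le> IdL_norm L * supn r" unfolding s_def by (simp add: mult.commute)
    qed
  qed
qed



theorem mainTheorem7:
  fixes N :: nat and xs :: "nat \<Rightarrow> real" and \<alpha> :: "nat \<Rightarrow> real"
    and L :: "(real \<Rightarrow> real) \<Rightarrow> (real \<Rightarrow> real)" and f :: "real \<Rightarrow> real" and n :: nat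
  assumes "N \<ge> 2"
    and "partition_pi N xs"
    and "\<forall>i\<in>{1..N}. \<bar>\<alpha> i\<bar> < 1"
    and "admissible_L L"
    and "f \<in> C2pi"
    and "n \<ge> 2"
  shows "E_alpha N xs \<alpha> L n n f \<le>
           (1 + alpha_norm N \<alpha> * (IdL_norm L - 1)) / (1 - alpha_norm N \<alpha>)
             * 2 * modcont f (2 * pi * sqrt 3 / (real n + 2))
         + alpha_norm N \<alpha> / (1 - alpha_norm N \<alpha>) * IdL_norm L * supn f"
proof -
  note N = assms(1) and part = assms(2) and al = assms(3) and adm = assms(4) and fC = assms(5) and n2 = assms(6)
  define W where "W = modcont f (2 * pi * sqrt 3 / (real n + 2))"
  define a where "a = alpha_norm N \<alpha>"
  define K where "K = IdL_norm L"
  have cf: "continuous_on {-pi..pi} f" and per: "f (-pi) = f pi" using fC unfolding C2pi_def by auto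
  obtain p where p: "p \<in> trig_poly n" and pb: "\<forall>x\<in>{-pi..pi}. \<bar>f x - p x\<bar> \<le> 2 * W"
    using jackson[OF cf per, of n] n2 unfolding W_def by auto
  have LC: "\<And>f. f \<in> C2pi \<Longrightarrow> L f \<in> C2pi" using adm unfolding admissible_L_def by blast
  have Lend: "\<And>f. f \<in> C2pi \<Longrightarrow> L f (-pi) = f (-pi) \<and> L f pi = f pi" using adm unfolding admissible_L_def by blast
  have frI: "frac N xs \<alpha> r (L r)" if rC: "r \<in> C2pi" for r
    using N part al rC LC[OF rC] Lend[OF rC] unfolding frac_def C2pi_def by auto
  have prat: "p \<in> trig_rat n n"
  proof -
    have "\<exists>p' q. p = (\<lambda>x. p' x / q x) \<and> p' \<in> trig_poly n \<and> q \<in> trig_poly n \<and> (\<forall>x\<in>{-pi..pi}. q x > 0)"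
      using p tp_one[of n] by (intro exI[of _ p] exI[of _ "\<lambda>x. 1"]) auto
    then show ?thesis unfolding trig_rat_def by blast
  qed
  have pC: "p \<in> C2pi" by (rule trig_rat_C2pi[OF prat])
  interpret F: frac N xs \<alpha> p "L p" by (rule frI[OF pC])
  have aeq: "F.an = a" unfolding F.an_def a_def ..
  define g where "g = fractal_op N xs \<alpha> L p"
  have gf: "g = fractal_fun N xs \<alpha> (L p) p" unfolding g_def fractal_op_def ..
  define X where "X = {supn (\<lambda>x. f x - r\<alpha> x) | r\<alpha>. r\<alpha> \<in> fractal_op N xs \<alpha> L ` trig_rat n n}"
  have gX: "supn (\<lambda>x. f x - g x) \<in> X" unfolding X_def g_def using prat by blast
  have bddX: "bdd_below X" unfolding bdd_below_def
  proof (intro exI[of _ 0] ballI)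
    fix y assume "y \<in> X"
    then obtain r' where y: "y = supn (\<lambda>x. f x - fractal_op N xs \<alpha> L r' x)" and r': "r' \<in> trig_rat n n"
      unfolding X_def by blast
    have r'C: "r' \<in> C2pi" by (rule trig_rat_C2pi[OF r'])
    interpret G: frac N xs \<alpha> r' "L r'" by (rule frI[OF r'C])
    have "continuous_on {-pi..pi} (fractal_op N xs \<alpha> L r')" unfolding fractal_op_def by (rule G.fractal_cont)
    then have "continuous_on {-pi..pi} (\<lambda>x. f x - fractal_op N xs \<alpha> L r' x)" using cf by (intro continuous_intros)
    then show "0 \<le> y" unfolding y by (rule supn_nonneg)
  qed
  have E1: "E_alpha N xs \<alpha> L n n f \<le> supn (\<lambda>x. f x - g x)"
    unfolding E_alpha_def X_def[symmetric] by (rule cInf_lower[OF gX bddX])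
  have pLp: "supn (\<lambda>x. p x - L p x) \<le> K * supn p" "K \<ge> 0" unfolding K_def using IdL_bound[OF adm pC] by auto
  have a01: "0 \<le> a" "a < 1" using F.an_ge0 F.an_lt1 aeq by auto
  define A where "A = a / (1 - a)"
  have A0: "A \<ge> 0" using a01 unfolding A_def by simp
  have E2: "supn (\<lambda>x. f x - g x) \<le> 2 * W + A * supn (\<lambda>x. p x - L p x)"
  proof (rule supn_le)
    fix x assume x: "x \<in> {-pi..pi}"
    have "\<bar>g x - p x\<bar> \<le> A * supn (\<lambda>x. p x - L p x)" unfolding gf A_def using F.fractal_bound[OF x] aeq by simp
    moreover have "\<bar>f x - p x\<bar> \<le> 2 * W" using pb x by blast
    ultimately show "\<bar>f x - g x\<bar> \<le> 2 * W + A * supn (\<lambda>x. p x - L p x)" by linarith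
  qed
  have E3: "supn p \<le> supn f + 2 * W"
  proof (rule supn_le)
    fix x assume x: "x \<in> {-pi..pi}"
    have "\<bar>f x\<bar> \<le> supn f" by (rule supn_ge[OF cf x])
    moreover have "\<bar>f x - p x\<bar> \<le> 2 * W" using pb x by blast
    ultimately show "\<bar>p x\<bar> \<le> supn f + 2 * W" by linarith
  qed
  have "E_alpha N xs \<alpha> L n n f \<le> 2 * W + A * (K * (supn f + 2 * W))"
  proof -
    have "A * supn (\<lambda>x. p x - L p x) \<le> A * (K * supn p)" using pLp A0 by (intro mult_left_mono) auto
    also have "\<dots> \<le> A * (K * (supn f + 2 * W))" using E3 pLp A0 by (intro mult_left_mono) auto
    finally show ?thesis using E1 E2 by linarith
  qed
  also have "\<dots> = (1 + a * (K - 1)) / (1 - a) * 2 * W + a / (1 - a) * K * supn f"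
  proof -
    have "(1 + a * (K - 1)) / (1 - a) = 1 + A * K" unfolding A_def using a01 by (simp add: field_simps)
    then show ?thesis unfolding A_def[symmetric] by (simp add: algebra_simps)
  qed
  finally show ?thesis unfolding W_def a_def K_def .
qed


end
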